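(* Let $\mathbb{K}$ be a non-Archimedean valued field and let $G$ be a discrete group. Then $G$ is normed $\mathbb{K}$-amenable if and only if $H^n_b(G, E) = 0$ for every dual normed $\mathbb{K}[G]$-module $E$ and all $n \geq 1$.
   Context: A non-Archimedean valued field is a field $\mathbb{K}$ with a map $|\cdot|_\mathbb{K}:\mathbb{K}\to\mathbb{R}_{\ge 0}$ with $|x|_\mathbb{K}=0$ iff $x=0$, $|x+y|_\mathbb{K}\le\max\{|x|_\mathbb{K},|y|_\mathbb{K}\}$, $|xy|_\mathbb{K}=|x|_\mathbb{K}|y|_\mathbb{K}$ (not assumed complete). A normed $\mathbb{K}$-vector space is a $\mathbb{K}$-vector space $E$ with a norm $\|\cdot\|$ satisfying $\|x\|=0$ iff $x=0$, the ultrametric inequality $\|x+y\|\le\max\{\|x\|,\|y\|\}$, and $\|\alpha x\|=|\alpha|_\mathbb{K}\|x\|$ (the norm need not take values in $|\mathbb{K}|_\mathbb{K}$). A normed $\mathbb{K}[G]$-module is a normed $\mathbb{K}$-vector space on which $G$ acts by linear isometries (no continuity required). For normed spaces, the topological dual $E^*$ carries the operator norm $\|T\|_{op}=\inf\{C\ge 0: |Tx|_\mathbb{K}\le C\|x\|\ \forall x\}$, and if $E$ is a normed $\mathbb{K}[G]$-module, $E^*$ is one with $(g\cdot\lambda)(x)=\lambda(g^{-1}x)$. A dual normed $\mathbb{K}[G]$-module is one isometrically $G$-isomorphic to the dual of a normed $\mathbb{K}[G]$-module. For a discrete group $G$ and normed $\mathbb{K}[G]$-module $E$, let $C^n_b(G,E)$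 be the space of bounded maps $G^{n+1}\to E$, with $G$-action $(g\cdot f)(g_0,\dots,g_n)=g\cdot f(g^{-1}g_0,\dots,g^{-1}g_n)$ and coboundary $\delta^n f(g_0,\dots,g_{n+1})=\sum_{i=0}^{n+1}(-1)^i f(g_0,\dots,\widehat{g_i},\dots,g_{n+1})$. The bounded cohomology $H^\bullet_b(G,E)$ is the cohomology of the subcomplex of $G$-invariants $C^\bullet_b(G,E)^G$. For a group $G$ (here discrete), $C_b(G,\mathbb{K})$ denotes bounded (continuous) functions $G\to\mathbb{K}$ with the sup norm, with $G$ acting by $(g\cdot f)(x)=f(g^{-1}x)$. A normed $\mathbb{K}$-mean on $G$ is a bounded linear map $m:C_b(G,\mathbb{K})\to\mathbb{K}$ with $m(\mathbbm{1}_G)=1$; it is left-invariant if $m(g\cdot f)=m(f)$ for all $g,f$. $G$ is normed $\mathbb{K}$-amenable if it admits a left-invariant normed $\mathbb{K}$-mean. *)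

theory Defs
  imports Complex_Main "HOL-Algebra.Group"
begin

definition nonarch_abs :: "('k::field \<Rightarrow> real) \<Rightarrow> bool" where
  "nonarch_abs absK \<longleftrightarrow>
     (\<forall>x. absK x \<ge> 0) \<and> (\<forall>x. absK x = 0 \<longleftrightarrow> x = 0) \<and>
     (\<forall>x y. absK (x + y) \<le> max (absK x) (absK y)) \<and>
     (\<forall>x y. absK (x * y) = absK x * absK y)"

record ('k, 'v) nspace =
  vcarrier :: "'v set"
  vzero :: "'v"
  vplus :: "'v \<Rightarrow> 'v \<Rightarrow> 'v"
  vscale :: "'k \<Rightarrow> 'v \<Rightarrow> 'v"
  vnorm :: "'v \<Rightarrow> real"

definition kvs :: "('k::field, 'v) nspace \<Rightarrow> bool" where
  "kvs E \<longleftrightarrow>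
     vzero E \<in> vcarrier E \<and>
     (\<forall>x\<in>vcarrier E. \<forall>y\<in>vcarrier E. vplus E x y \<in> vcarrier E) \<and>
     (\<forall>a. \<forall>x\<in>vcarrier E. vscale E a x \<in> vcarrier E) \<and>
     (\<forall>x\<in>vcarrier E. \<forall>y\<in>vcarrier E. \<forall>z\<in>vcarrier E.
         vplus E (vplus E x y) z = vplus E x (vplus E y z)) \<and>
     (\<forall>x\<in>vcarrier E. \<forall>y\<in>vcarrier E. vplus E x y = vplus E y x) \<and>
     (\<forall>x\<in>vcarrier E. vplus E (vzero E) x = x) \<and>
     (\<forall>x\<in>vcarrier E. \<exists>y\<in>vcarrier E. vplus E x y = vzero E) \<and>
     (\<forall>a. \<forall>x\<in>vcarrier E. \<forall>y\<in>vcarrier E.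
         vscale E a (vplus E x y) = vplus E (vscale E a x) (vscale E a y)) \<and>
     (\<forall>a b. \<forall>x\<in>vcarrier E. vscale E (a + b) x = vplus E (vscale E a x) (vscale E b x)) \<and>
     (\<forall>a b. \<forall>x\<in>vcarrier E. vscale E (a * b) x = vscale E a (vscale E b x)) \<and>
     (\<forall>x\<in>vcarrier E. vscale E 1 x = x)"

definition normed_kvs :: "('k::field \<Rightarrow> real) \<Rightarrow> ('k, 'v) nspace \<Rightarrow> bool" where
  "normed_kvs absK E \<longleftrightarrow> kvs E \<and>
     (\<forall>x\<in>vcarrier E. vnorm E x \<ge> 0) \<and>
     (\<forall>x\<in>vcarrier E. vnorm E x = 0 \<longleftrightarrow> x = vzero E) \<and>
     (\<forall>x\<in>vcarrier E. \<forall>y\<in>vcarrier E. vnorm E (vplus E x y) \<le> max (vnorm E x) (vnorm E y)) \<and>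
     (\<forall>a. \<forall>x\<in>vcarrier E. vnorm E (vscale E a x) = absK a * vnorm E x)"

definition normed_module ::
  "('k::field \<Rightarrow> real) \<Rightarrow> ('g, 'b) monoid_scheme \<Rightarrow> ('k, 'v) nspace \<Rightarrow> ('g \<Rightarrow> 'v \<Rightarrow> 'v) \<Rightarrow> bool" where
  "normed_module absK G E act \<longleftrightarrow> normed_kvs absK E \<and>
     (\<forall>g\<in>carrier G. \<forall>x\<in>vcarrier E. act g x \<in> vcarrier E) \<and>
     (\<forall>x\<in>vcarrier E. act \<one>\<^bsub>G\<^esub> x = x) \<and>
     (\<forall>g\<in>carrier G. \<forall>h\<in>carrier G. \<forall>x\<in>vcarrier E. act (g \<otimes>\<^bsub>G\<^esub> h) x = act g (act h x)) \<and>
     (\<forall>g\<in>carrier G. \<forall>x\<in>vcarrier E. \<forall>y\<in>vcarrier E. act g (vplus E x y) = vplus E (act g x) (act g y)) \<and>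
     (\<forall>g\<in>carrier G. \<forall>a. \<forall>x\<in>vcarrier E. act g (vscale E a x) = vscale E a (act g x)) \<and>
     (\<forall>g\<in>carrier G. \<forall>x\<in>vcarrier E. vnorm E (act g x) = vnorm E x)"

definition bounded_functionals :: "('k::field \<Rightarrow> real) \<Rightarrow> ('k, 'v) nspace \<Rightarrow> ('v \<Rightarrow> 'k) set" where
  "bounded_functionals absK V = {l.
     (\<forall>x\<in>vcarrier V. \<forall>y\<in>vcarrier V. l (vplus V x y) = l x + l y) \<and>
     (\<forall>a. \<forall>x\<in>vcarrier V. l (vscale V a x) = a * l x) \<and>
     (\<exists>C\<ge>0. \<forall>x\<in>vcarrier V. absK (l x) \<le> C * vnorm V x) \<and>
     (\<forall>x. x \<notin> vcarrier V \<longrightarrow> l x = 0)}"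

definition op_norm :: "('k::field \<Rightarrow> real) \<Rightarrow> ('k, 'v) nspace \<Rightarrow> ('v \<Rightarrow> 'k) \<Rightarrow> real" where
  "op_norm absK V l = Inf {C. C \<ge> 0 \<and> (\<forall>x\<in>vcarrier V. absK (l x) \<le> C * vnorm V x)}"

definition dual_space :: "('k::field \<Rightarrow> real) \<Rightarrow> ('k, 'v) nspace \<Rightarrow> ('k, 'v \<Rightarrow> 'k) nspace" where
  "dual_space absK V = \<lparr> vcarrier = bounded_functionals absK V,
     vzero = (\<lambda>x. 0),
     vplus = (\<lambda>l m x. l x + m x),
     vscale = (\<lambda>a l x. a * l x),
     vnorm = op_norm absK V \<rparr>"

definition dual_act :: "('g, 'b) monoid_scheme \<Rightarrow> ('k::field, 'v) nspace \<Rightarrow> ('g \<Rightarrow> 'v \<Rightarrow> 'v)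
     \<Rightarrow> 'g \<Rightarrow> ('v \<Rightarrow> 'k) \<Rightarrow> ('v \<Rightarrow> 'k)" where
  "dual_act G V act g l = (\<lambda>x. if x \<in> vcarrier V then l (act (inv\<^bsub>G\<^esub> g) x) else 0)"

definition iso_G_isometric ::
  "('k::field \<Rightarrow> real) \<Rightarrow> ('g, 'b) monoid_scheme \<Rightarrow> ('k, 'e) nspace \<Rightarrow> ('g \<Rightarrow> 'e \<Rightarrow> 'e)
     \<Rightarrow> ('k, 'd) nspace \<Rightarrow> ('g \<Rightarrow> 'd \<Rightarrow> 'd) \<Rightarrow> ('e \<Rightarrow> 'd) \<Rightarrow> bool" where
  "iso_G_isometric absK G E actE D actD T \<longleftrightarrow>
     bij_betw T (vcarrier E) (vcarrier D) \<and>
     (\<forall>x\<in>vcarrier E. \<forall>y\<in>vcarrier E. T (vplus E x y) = vplus D (T x) (T y)) \<and>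
     (\<forall>a. \<forall>x\<in>vcarrier E. T (vscale E a x) = vscale D a (T x)) \<and>
     (\<forall>x\<in>vcarrier E. vnorm D (T x) = vnorm E x) \<and>
     (\<forall>g\<in>carrier G. \<forall>x\<in>vcarrier E. T (actE g x) = actD g (T x))"

text \<open>E (with action actE) is a dual normed K[G]-module, witnessed by the
  normed K[G]-module V (with action actV): E is isometrically G-isomorphic to V*.\<close>

definition dual_module_of ::
  "('k::field \<Rightarrow> real) \<Rightarrow> ('g, 'b) monoid_scheme \<Rightarrow> ('k, 'e) nspace \<Rightarrow> ('g \<Rightarrow> 'e \<Rightarrow> 'e)
     \<Rightarrow> ('k, 'v) nspace \<Rightarrow> ('g \<Rightarrow> 'v \<Rightarrow> 'v) \<Rightarrow> bool" where
  "dual_module_of absK G E actE V actV \<longleftrightarrow>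
     normed_module absK G E actE \<and> normed_module absK G V actV \<and>
     (\<exists>T. iso_G_isometric absK G E actE (dual_space absK V) (dual_act G V actV) T)"

text \<open>An n-cochain is a map G^(n+1) -> E, modelled on lists of length n+1 with
  entries in the carrier of G, and extended by zero elsewhere.\<close>

definition gtuples :: "('g, 'b) monoid_scheme \<Rightarrow> nat \<Rightarrow> 'g list set" where
  "gtuples G n = {xs. length xs = Suc n \<and> set xs \<subseteq> carrier G}"

definition bcochains ::
  "('g, 'b) monoid_scheme \<Rightarrow> ('k::field, 'e) nspace \<Rightarrow> nat \<Rightarrow> ('g list \<Rightarrow> 'e) set" where
  "bcochains G E n = {f.
     (\<forall>xs\<in>gtuples G n. f xs \<in> vcarrier E) \<and>
     (\<forall>xs. xs \<notin> gtuples G n \<longrightarrow> f xs = vzero E) \<and>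
     (\<exists>C. \<forall>xs\<in>gtuples G n. vnorm E (f xs) \<le> C)}"

definition inv_bcochains ::
  "('g, 'b) monoid_scheme \<Rightarrow> ('k::field, 'e) nspace \<Rightarrow> ('g \<Rightarrow> 'e \<Rightarrow> 'e) \<Rightarrow> nat \<Rightarrow> ('g list \<Rightarrow> 'e) set" where
  "inv_bcochains G E act n = {f \<in> bcochains G E n.
     \<forall>g\<in>carrier G. \<forall>xs\<in>gtuples G n. act g (f (map (\<lambda>x. inv\<^bsub>G\<^esub> g \<otimes>\<^bsub>G\<^esub> x) xs)) = f xs}"

definition vsum_list :: "('k, 'e) nspace \<Rightarrow> 'e list \<Rightarrow> 'e" where
  "vsum_list E vs = foldr (vplus E) vs (vzero E)"

definition coboundary ::
  "('g, 'b) monoid_scheme \<Rightarrow> ('k::field, 'e) nspace \<Rightarrow> nat \<Rightarrow> ('g list \<Rightarrow> 'e) \<Rightarrow> ('g list \<Rightarrow> 'e)" where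
  "coboundary G E n f = (\<lambda>xs. if xs \<in> gtuples G (Suc n) then
     vsum_list E (map (\<lambda>i. vscale E ((-1) ^ i) (f (take i xs @ drop (Suc i) xs))) [0..<n+2])
     else vzero E)"

definition Hb_vanishes ::
  "('g, 'b) monoid_scheme \<Rightarrow> ('k::field, 'e) nspace \<Rightarrow> ('g \<Rightarrow> 'e \<Rightarrow> 'e) \<Rightarrow> nat \<Rightarrow> bool" where
  "Hb_vanishes G E act n \<longleftrightarrow>
     (\<forall>f\<in>inv_bcochains G E act n. coboundary G E n f = (\<lambda>xs. vzero E) \<longrightarrow>
        (\<exists>h\<in>inv_bcochains G E act (n - 1). coboundary G E (n - 1) h = f))"

definition Cb :: "('k::field \<Rightarrow> real) \<Rightarrow> ('g, 'b) monoid_scheme \<Rightarrow> ('g \<Rightarrow> 'k) set" where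
  "Cb absK G = {f. (\<exists>C. \<forall>x\<in>carrier G. absK (f x) \<le> C) \<and> (\<forall>x. x \<notin> carrier G \<longrightarrow> f x = 0)}"

definition sup_norm :: "('k::field \<Rightarrow> real) \<Rightarrow> ('g, 'b) monoid_scheme \<Rightarrow> ('g \<Rightarrow> 'k) \<Rightarrow> real" where
  "sup_norm absK G f = Sup ((\<lambda>x. absK (f x)) ` carrier G)"

definition indicator_G :: "('g, 'b) monoid_scheme \<Rightarrow> 'g \<Rightarrow> 'k::field" where
  "indicator_G G = (\<lambda>x. if x \<in> carrier G then 1 else 0)"

definition left_translate :: "('g, 'b) monoid_scheme \<Rightarrow> 'g \<Rightarrow> ('g \<Rightarrow> 'k::field) \<Rightarrow> ('g \<Rightarrow> 'k)" where
  "left_translate G g f = (\<lambda>x. if x \<in> carrier G then f (inv\<^bsub>G\<^esub> g \<otimes>\<^bsub>G\<^esub> x) else 0)"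

definition normed_mean :: "('k::field \<Rightarrow> real) \<Rightarrow> ('g, 'b) monoid_scheme \<Rightarrow> (('g \<Rightarrow> 'k) \<Rightarrow> 'k) \<Rightarrow> bool" where
  "normed_mean absK G m \<longleftrightarrow>
     (\<forall>f\<in>Cb absK G. \<forall>h\<in>Cb absK G. m (\<lambda>x. f x + h x) = m f + m h) \<and>
     (\<forall>a. \<forall>f\<in>Cb absK G. m (\<lambda>x. a * f x) = a * m f) \<and>
     (\<exists>C\<ge>0. \<forall>f\<in>Cb absK G. absK (m f) \<le> C * sup_norm absK G f) \<and>
     m (indicator_G G) = 1"

definition normed_amenable :: "('k::field \<Rightarrow> real) \<Rightarrow> ('g, 'b) monoid_scheme \<Rightarrow> bool" where
  "normed_amenable absK G \<longleftrightarrow> (\<exists>m. normed_mean absK G m \<and>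
     (\<forall>g\<in>carrier G. \<forall>f\<in>Cb absK G. m (left_translate G g f) = m f))"

end

theory Submission
  imports Defs
begin

section \<open>Absolute value facts\<close>

lemma na_nonneg: "nonarch_abs absK \<Longrightarrow> absK x \<ge> 0"
  by (simp add: nonarch_abs_def)
lemma na_zero: "nonarch_abs absK \<Longrightarrow> absK x = 0 \<longleftrightarrow> x = 0"
  by (simp add: nonarch_abs_def)
lemma na_ultra: "nonarch_abs absK \<Longrightarrow> absK (x + y) \<le> max (absK x) (absK y)"
  by (simp add: nonarch_abs_def)
lemma na_mult: "nonarch_abs absK \<Longrightarrow> absK (x * y) = absK x * absK y"
  by (simp add: nonarch_abs_def)

lemma na_abs0: "nonarch_abs absK \<Longrightarrow> absK 0 = 0"
  by (simp add: nonarch_abs_def)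

lemma na_one: assumes "nonarch_abs absK" shows "absK 1 = 1"
proof -
  have "absK 1 = absK 1 * absK 1" using na_mult[OF assms, of 1 1] by simp
  moreover have "absK 1 \<noteq> 0" using na_zero[OF assms, of 1] by simp
  ultimately show ?thesis by (metis mult_cancel_left1)
qed

lemma na_minus_one: assumes "nonarch_abs absK" shows "absK (-1) = 1"
proof -
  have "absK (-1) * absK (-1) = 1" using na_mult[OF assms, of "-1" "-1"] na_one[OF assms] by simp
  moreover have "absK (-1) \<ge> 0" using na_nonneg[OF assms] .
  ultimately show ?thesis
    by (metis abs_of_nonneg abs_square_eq_1 power2_eq_square)
qed

lemma na_uminus: assumes "nonarch_abs absK" shows "absK (- x) = absK x"
  using na_mult[OF assms, of "-1" x] na_minus_one[OF assms] by simp

lemma na_diff: assumes "nonarch_abs absK" shows "absK (x - y) \<le> max (absK x) (absK y)"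
  using na_ultra[OF assms, of x "-y"] na_uminus[OF assms, of y] by simp

lemma na_pow_m1: assumes "nonarch_abs absK" shows "absK ((-1) ^ i) = 1"
  by (induction i) (auto simp: na_uminus[OF assms] na_one[OF assms])

section \<open>Operator norm\<close>

lemma kvs_zero_plus: "kvs E \<Longrightarrow> vplus E (vzero E) (vzero E) = vzero E"
  unfolding kvs_def by blast

lemma bf_zero:
  assumes "kvs V" "l \<in> bounded_functionals absK V"
  shows "l (vzero V) = 0"
proof -
  have z: "vzero V \<in> vcarrier V" using assms(1) by (simp add: kvs_def)
  have "l (vplus V (vzero V) (vzero V)) = l (vzero V) + l (vzero V)"
    using assms(2) z by (simp add: bounded_functionals_def)
  then show ?thesis using kvs_zero_plus[OF assms(1)] by (metis add_cancel_right_right)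
qed

lemma opn_set_ne:
  assumes "l \<in> bounded_functionals absK V"
  shows "{C. C \<ge> 0 \<and> (\<forall>x\<in>vcarrier V. absK (l x) \<le> C * vnorm V x)} \<noteq> {}"
  using assms by (auto simp: bounded_functionals_def)

lemma opn_nonneg:
  assumes "l \<in> bounded_functionals absK V"
  shows "op_norm absK V l \<ge> 0"
  unfolding op_norm_def by (rule cInf_greatest[OF opn_set_ne[OF assms]]) auto

lemma opn_le:
  assumes "C \<ge> 0" "\<forall>x\<in>vcarrier V. absK (l x) \<le> C * vnorm V x"
  shows "op_norm absK V l \<le> C"
  unfolding op_norm_def
  by (rule cInf_lower) (use assms in \<open>auto intro: bdd_belowI[where m=0]\<close>)

lemma opn_bound:
  assumes "normed_kvs absK V" "nonarch_abs absK" "l \<in> bounded_functionals absK V" "x \<in> vcarrier V"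
  shows "absK (l x) \<le> op_norm absK V l * vnorm V x"
proof (cases "vnorm V x = 0")
  case True
  then have "x = vzero V" using assms(1,4) by (simp add: normed_kvs_def)
  then have "l x = 0" using bf_zero[OF _ assms(3)] assms(1) by (simp add: normed_kvs_def)
  then show ?thesis using True na_zero[OF assms(2), of 0] by simp
next
  case False
  then have pos: "vnorm V x > 0" using assms(1,4) unfolding normed_kvs_def
    by (metis less_eq_real_def)
  have "absK (l x) / vnorm V x \<le> op_norm absK V l"
    unfolding op_norm_def
  proof (rule cInf_greatest[OF opn_set_ne[OF assms(3)]])
    fix C assume "C \<in> {C. C \<ge> 0 \<and> (\<forall>x\<in>vcarrier V. absK (l x) \<le> C * vnorm V x)}"
    then have "absK (l x) \<le> C * vnorm V x" using assms(4) by auto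
    then show "absK (l x) / vnorm V x \<le> C" using pos by (simp add: divide_le_eq)
  qed
  then show ?thesis using pos by (simp add: divide_le_eq)
qed

lemma bf_zero_fun: "nonarch_abs absK \<Longrightarrow> (\<lambda>x. 0) \<in> bounded_functionals absK V"
  unfolding bounded_functionals_def by (auto simp: na_abs0 intro!: exI[of _ 0])

lemma bf_lin:
  assumes "l \<in> bounded_functionals absK V" "x \<in> vcarrier V" "y \<in> vcarrier V"
  shows "l (vplus V x y) = l x + l y"
  using assms by (simp add: bounded_functionals_def)

lemma bf_scale:
  assumes "l \<in> bounded_functionals absK V" "x \<in> vcarrier V"
  shows "l (vscale V a x) = a * l x"
  using assms by (simp add: bounded_functionals_def)

lemma bf_out:
  assumes "l \<in> bounded_functionals absK V" "x \<notin> vcarrier V"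
  shows "l x = 0"
  using assms by (simp add: bounded_functionals_def)

lemma bf_plus:
  assumes na: "nonarch_abs absK" and nk: "normed_kvs absK V"
    and l: "l \<in> bounded_functionals absK V" and m: "m \<in> bounded_functionals absK V"
  shows "(\<lambda>x. l x + m x) \<in> bounded_functionals absK V"
proof -
  obtain C1 where C1: "C1 \<ge> 0" "\<forall>x\<in>vcarrier V. absK (l x) \<le> C1 * vnorm V x"
    using l by (auto simp: bounded_functionals_def)
  obtain C2 where C2: "C2 \<ge> 0" "\<forall>x\<in>vcarrier V. absK (m x) \<le> C2 * vnorm V x"
    using m by (auto simp: bounded_functionals_def)
  have "\<forall>x\<in>vcarrier V. absK (l x + m x) \<le> (C1 + C2) * vnorm V x"
  proof
    fix x assume x: "x \<in> vcarrier V"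
    have "absK (l x + m x) \<le> max (absK (l x)) (absK (m x))" by (rule na_ultra[OF na])
    also have "\<dots> \<le> absK (l x) + absK (m x)" using na_nonneg[OF na] by simp
    also have "\<dots> \<le> C1 * vnorm V x + C2 * vnorm V x" using C1 C2 x by (meson add_mono)
    finally show "absK (l x + m x) \<le> (C1 + C2) * vnorm V x" by (simp add: distrib_right)
  qed
  then show ?thesis using l m C1 C2 unfolding bounded_functionals_def
    by (auto intro!: exI[of _ "C1 + C2"] simp: algebra_simps)
qed

lemma bf_smult:
  assumes na: "nonarch_abs absK" and l: "l \<in> bounded_functionals absK V"
  shows "(\<lambda>x. a * l x) \<in> bounded_functionals absK V"
proof -
  obtain C1 where C1: "C1 \<ge> 0" "\<forall>x\<in>vcarrier V. absK (l x) \<le> C1 * vnorm V x"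
    using l by (auto simp: bounded_functionals_def)
  have "\<forall>x\<in>vcarrier V. absK (a * l x) \<le> (absK a * C1) * vnorm V x"
    using C1 na_nonneg[OF na, of a] by (auto simp: na_mult[OF na] mult.assoc intro: mult_left_mono)
  then show ?thesis using l C1 na_nonneg[OF na, of a] unfolding bounded_functionals_def
    by (auto intro!: exI[of _ "absK a * C1"] simp: algebra_simps)
qed

lemma opn_zero_iff:
  assumes nk: "normed_kvs absK V" and na: "nonarch_abs absK" and l: "l \<in> bounded_functionals absK V"
  shows "op_norm absK V l = 0 \<longleftrightarrow> l = (\<lambda>x. 0)"
proof
  assume h: "op_norm absK V l = 0"
  show "l = (\<lambda>x. 0)"
  proof
    fix x show "l x = 0"
    proof (cases "x \<in> vcarrier V")
      case True
      then have "absK (l x) \<le> 0" using opn_bound[OF nk na l True] h by simp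
      then show ?thesis using na_nonneg[OF na, of "l x"] na_zero[OF na] by (meson order_antisym)
    next
      case False then show ?thesis using bf_out[OF l] by simp
    qed
  qed
next
  assume "l = (\<lambda>x. 0)"
  then have "op_norm absK V l \<le> 0" using na_zero[OF na, of 0] by (intro opn_le) auto
  then show "op_norm absK V l = 0" using opn_nonneg[OF l] by simp
qed

lemma opn_ultra:
  assumes nk: "normed_kvs absK V" and na: "nonarch_abs absK"
    and l: "l \<in> bounded_functionals absK V" and m: "m \<in> bounded_functionals absK V"
  shows "op_norm absK V (\<lambda>x. l x + m x) \<le> max (op_norm absK V l) (op_norm absK V m)"
proof (rule opn_le)
  show "0 \<le> max (op_norm absK V l) (op_norm absK V m)" using opn_nonneg[OF l] by simp
  show "\<forall>x\<in>vcarrier V. absK (l x + m x) \<le> max (op_norm absK V l) (op_norm absK V m) * vnorm V x"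
  proof
    fix x assume x: "x \<in> vcarrier V"
    have nx: "vnorm V x \<ge> 0" using nk x by (simp add: normed_kvs_def)
    have "absK (l x + m x) \<le> max (absK (l x)) (absK (m x))" by (rule na_ultra[OF na])
    also have "\<dots> \<le> max (op_norm absK V l * vnorm V x) (op_norm absK V m * vnorm V x)"
      using opn_bound[OF nk na l x] opn_bound[OF nk na m x] by (rule max.mono)
    also have "\<dots> = max (op_norm absK V l) (op_norm absK V m) * vnorm V x"
      using nx by (simp add: max_mult_distrib_right)
    finally show "absK (l x + m x) \<le> max (op_norm absK V l) (op_norm absK V m) * vnorm V x" .
  qed
qed

lemma opn_smult_le:
  assumes nk: "normed_kvs absK V" and na: "nonarch_abs absK" and l: "l \<in> bounded_functionals absK V"
  shows "op_norm absK V (\<lambda>x. a * l x) \<le> absK a * op_norm absK V l"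
proof (rule opn_le)
  show "0 \<le> absK a * op_norm absK V l" using opn_nonneg[OF l] na_nonneg[OF na, of a] by simp
  show "\<forall>x\<in>vcarrier V. absK (a * l x) \<le> absK a * op_norm absK V l * vnorm V x"
    using opn_bound[OF nk na l] na_nonneg[OF na, of a]
    by (auto simp: na_mult[OF na] mult.assoc intro: mult_left_mono)
qed

lemma opn_smult:
  assumes nk: "normed_kvs absK V" and na: "nonarch_abs absK" and l: "l \<in> bounded_functionals absK V"
  shows "op_norm absK V (\<lambda>x. a * l x) = absK a * op_norm absK V l"
proof (cases "a = 0")
  case True
  have "op_norm absK V (\<lambda>x. 0) = 0" using opn_zero_iff[OF nk na bf_zero_fun[OF na]] by simp
  then show ?thesis using True na_zero[OF na, of 0] by simp
next
  case False
  have al: "(\<lambda>x. a * l x) \<in> bounded_functionals absK V" by (rule bf_smult[OF na l])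
  have "op_norm absK V (\<lambda>x. inverse a * (a * l x)) \<le> absK (inverse a) * op_norm absK V (\<lambda>x. a * l x)"
    by (rule opn_smult_le[OF nk na al])
  moreover have "(\<lambda>x. inverse a * (a * l x)) = l" using False by (simp add: field_simps)
  moreover have "absK (inverse a) * absK a = 1" using False
    by (metis na_mult[OF na] na_one[OF na] left_inverse)
  moreover have "absK a > 0" using False na_zero[OF na, of a] na_nonneg[OF na, of a] by simp
  ultimately have h1: "op_norm absK V l \<le> absK (inverse a) * op_norm absK V (\<lambda>x. a * l x)"
    and i1: "absK a * absK (inverse a) = 1" and ap: "absK a > 0" by (auto simp: mult.commute)
  have "absK a * op_norm absK V l \<le> absK a * (absK (inverse a) * op_norm absK V (\<lambda>x. a * l x))"
    using h1 ap by (intro mult_left_mono) auto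
  also have "\<dots> = op_norm absK V (\<lambda>x. a * l x)" using i1 by (simp add: mult.assoc[symmetric])
  finally have "absK a * op_norm absK V l \<le> op_norm absK V (\<lambda>x. a * l x)" .
  then show ?thesis using opn_smult_le[OF nk na l, of a] by simp
qed

lemma dual_normed_kvs:
  assumes na: "nonarch_abs absK" and nk: "normed_kvs absK V"
  shows "normed_kvs absK (dual_space absK V)"
proof -
  have k: "kvs (dual_space absK V)"
    unfolding kvs_def dual_space_def
    apply (simp add: bf_zero_fun[OF na] bf_plus[OF na nk] bf_smult[OF na])
    apply (intro conjI ballI allI)
            apply (simp_all add: fun_eq_iff algebra_simps)
    subgoal for l
      by (rule bexI[where x="\<lambda>x. (-1) * l x"]) (use bf_smult[OF na, of l V "-1"] in auto)
    done
  show ?thesis unfolding normed_kvs_def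
    using k by (simp add: dual_space_def opn_nonneg opn_zero_iff[OF nk na] opn_ultra[OF nk na] opn_smult[OF nk na])
qed

lemma nm_kvs: "normed_module absK G E act \<Longrightarrow> normed_kvs absK E"
  by (simp add: normed_module_def)
lemma nm_closed: "normed_module absK G E act \<Longrightarrow> g \<in> carrier G \<Longrightarrow> x \<in> vcarrier E \<Longrightarrow> act g x \<in> vcarrier E"
  by (simp add: normed_module_def)
lemma nm_one: "normed_module absK G E act \<Longrightarrow> x \<in> vcarrier E \<Longrightarrow> act \<one>\<^bsub>G\<^esub> x = x"
  by (simp add: normed_module_def)
lemma nm_mult: "normed_module absK G E act \<Longrightarrow> g \<in> carrier G \<Longrightarrow> h \<in> carrier G \<Longrightarrow> x \<in> vcarrier E
   \<Longrightarrow> act (g \<otimes>\<^bsub>G\<^esub> h) x = act g (act h x)"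
  by (simp add: normed_module_def)
lemma nm_plus: "normed_module absK G E act \<Longrightarrow> g \<in> carrier G \<Longrightarrow> x \<in> vcarrier E \<Longrightarrow> y \<in> vcarrier E
   \<Longrightarrow> act g (vplus E x y) = vplus E (act g x) (act g y)"
  by (simp add: normed_module_def)
lemma nm_scale: "normed_module absK G E act \<Longrightarrow> g \<in> carrier G \<Longrightarrow> x \<in> vcarrier E
   \<Longrightarrow> act g (vscale E a x) = vscale E a (act g x)"
  by (simp add: normed_module_def)
lemma nm_norm: "normed_module absK G E act \<Longrightarrow> g \<in> carrier G \<Longrightarrow> x \<in> vcarrier E
   \<Longrightarrow> vnorm E (act g x) = vnorm E x"
  by (simp add: normed_module_def)

lemma nk_plus: "normed_kvs absK E \<Longrightarrow> x \<in> vcarrier E \<Longrightarrow> y \<in> vcarrier E \<Longrightarrow> vplus E x y \<in> vcarrier E"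
  by (simp add: normed_kvs_def kvs_def)
lemma nk_scale: "normed_kvs absK E \<Longrightarrow> x \<in> vcarrier E \<Longrightarrow> vscale E a x \<in> vcarrier E"
  by (simp add: normed_kvs_def kvs_def)
lemma nk_zero: "normed_kvs absK E \<Longrightarrow> vzero E \<in> vcarrier E"
  by (simp add: normed_kvs_def kvs_def)
lemma nk_norm_nonneg: "normed_kvs absK E \<Longrightarrow> x \<in> vcarrier E \<Longrightarrow> vnorm E x \<ge> 0"
  by (simp add: normed_kvs_def)

lemma dual_act_bf:
  assumes na: "nonarch_abs absK" and grp: "group G" and nm: "normed_module absK G V act"
    and g: "g \<in> carrier G" and l: "l \<in> bounded_functionals absK V"
  shows "dual_act G V act g l \<in> bounded_functionals absK V"
proof -
  have ig: "inv\<^bsub>G\<^esub> g \<in> carrier G" using grp g by simp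
  have nk: "normed_kvs absK V" using nm by (simp add: normed_module_def)
  obtain C where C: "C \<ge> 0" "\<forall>x\<in>vcarrier V. absK (l x) \<le> C * vnorm V x"
    using l by (auto simp: bounded_functionals_def)
  show ?thesis
    unfolding bounded_functionals_def dual_act_def
  proof (intro CollectI conjI ballI allI impI)
    fix x y assume x: "x \<in> vcarrier V" and y: "y \<in> vcarrier V"
    show "(if vplus V x y \<in> vcarrier V then l (act (inv\<^bsub>G\<^esub> g) (vplus V x y)) else 0) =
          (if x \<in> vcarrier V then l (act (inv\<^bsub>G\<^esub> g) x) else 0) +
          (if y \<in> vcarrier V then l (act (inv\<^bsub>G\<^esub> g) y) else 0)"
      using x y nk_plus[OF nk x y] nm_plus[OF nm ig x y] bf_lin[OF l] nm_closed[OF nm ig] by simp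
  next
    fix a x assume x: "x \<in> vcarrier V"
    show "(if vscale V a x \<in> vcarrier V then l (act (inv\<^bsub>G\<^esub> g) (vscale V a x)) else 0) =
          a * (if x \<in> vcarrier V then l (act (inv\<^bsub>G\<^esub> g) x) else 0)"
      using x nk_scale[OF nk x] nm_scale[OF nm ig x] bf_scale[OF l] nm_closed[OF nm ig] by simp
  next
    show "\<exists>C\<ge>0. \<forall>x\<in>vcarrier V. absK (if x \<in> vcarrier V then l (act (inv\<^bsub>G\<^esub> g) x) else 0) \<le> C * vnorm V x"
    proof (intro exI[of _ C] conjI ballI)
      fix x assume x: "x \<in> vcarrier V"
      have "absK (l (act (inv\<^bsub>G\<^esub> g) x)) \<le> C * vnorm V (act (inv\<^bsub>G\<^esub> g) x)"
        using C(2) nm_closed[OF nm ig x] by blast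
      then show "absK (if x \<in> vcarrier V then l (act (inv\<^bsub>G\<^esub> g) x) else 0) \<le> C * vnorm V x"
        using x nm_norm[OF nm ig x] by simp
    qed (use C in auto)
  next
    fix x assume "x \<notin> vcarrier V"
    then show "(if x \<in> vcarrier V then l (act (inv\<^bsub>G\<^esub> g) x) else 0) = 0" by simp
  qed
qed

lemma dual_act_one:
  assumes grp: "group G" and nm: "normed_module absK G V act" and l: "l \<in> bounded_functionals absK V"
  shows "dual_act G V act \<one>\<^bsub>G\<^esub> l = l"
  unfolding dual_act_def using grp nm_one[OF nm] bf_out[OF l] by (auto simp: fun_eq_iff monoid.inv_one[OF group.is_monoid[OF grp]])

lemma dual_act_mult:
  assumes grp: "group G" and nm: "normed_module absK G V act"
    and g: "g \<in> carrier G" and h: "h \<in> carrier G"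
  shows "dual_act G V act (g \<otimes>\<^bsub>G\<^esub> h) l = dual_act G V act g (dual_act G V act h l)"
proof -
  have "inv\<^bsub>G\<^esub> (g \<otimes>\<^bsub>G\<^esub> h) = inv\<^bsub>G\<^esub> h \<otimes>\<^bsub>G\<^esub> inv\<^bsub>G\<^esub> g"
    using grp g h by (simp add: group.inv_mult_group)
  then show ?thesis unfolding dual_act_def using grp g h nm_mult[OF nm] nm_closed[OF nm]
    by (auto simp: fun_eq_iff)
qed

lemma dual_act_inv_cancel:
  assumes grp: "group G" and nm: "normed_module absK G V act" and g: "g \<in> carrier G"
    and l: "l \<in> bounded_functionals absK V"
  shows "dual_act G V act (inv\<^bsub>G\<^esub> g) (dual_act G V act g l) = l"
  using dual_act_mult[OF grp nm, of "inv\<^bsub>G\<^esub> g" g l, symmetric] dual_act_one[OF grp nm l] grp g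
  by (simp add: group.l_inv)

lemma dual_normed_module:
  assumes na: "nonarch_abs absK" and grp: "group G" and nm: "normed_module absK G V act"
  shows "normed_module absK G (dual_space absK V) (dual_act G V act)"
proof -
  have nk: "normed_kvs absK V" using nm by (simp add: normed_module_def)
  have opl: "op_norm absK V (dual_act G V act g l) \<le> op_norm absK V l"
    if g: "g \<in> carrier G" and l: "l \<in> bounded_functionals absK V" for g l
  proof (rule opn_le)
    show "0 \<le> op_norm absK V l" by (rule opn_nonneg[OF l])
    have ig: "inv\<^bsub>G\<^esub> g \<in> carrier G" using grp g by simp
    show "\<forall>x\<in>vcarrier V. absK (dual_act G V act g l x) \<le> op_norm absK V l * vnorm V x"
      unfolding dual_act_def using opn_bound[OF nk na l] nm_closed[OF nm ig] nm_norm[OF nm ig]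
      by fastforce
  qed
  have iso: "op_norm absK V (dual_act G V act g l) = op_norm absK V l"
    if g: "g \<in> carrier G" and l: "l \<in> bounded_functionals absK V" for g l
  proof -
    have ig: "inv\<^bsub>G\<^esub> g \<in> carrier G" using grp g by simp
    have "op_norm absK V l \<le> op_norm absK V (dual_act G V act g l)"
      using opl[OF ig dual_act_bf[OF na grp nm g l]] dual_act_inv_cancel[OF grp nm g l] by simp
    then show ?thesis using opl[OF g l] by simp
  qed
  show ?thesis
    unfolding normed_module_def
  proof (intro conjI)
    show "normed_kvs absK (dual_space absK V)" by (rule dual_normed_kvs[OF na nk])
  qed (auto simp: dual_space_def dual_act_bf[OF na grp nm] dual_act_one[OF grp nm]
      dual_act_mult[OF grp nm] iso, auto simp: dual_act_def fun_eq_iff algebra_simps)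
qed

lemma grp_cancel1:
  assumes "group G" "g \<in> carrier G" "x \<in> carrier G"
  shows "inv\<^bsub>G\<^esub> g \<otimes>\<^bsub>G\<^esub> (g \<otimes>\<^bsub>G\<^esub> x) = x"
proof -
  interpret group G by fact
  show ?thesis using assms(2,3) by (simp add: m_assoc[symmetric])
qed

lemma grp_inv_inv:
  assumes "group G" "g \<in> carrier G"
  shows "inv\<^bsub>G\<^esub> (inv\<^bsub>G\<^esub> g) = g"
proof -
  interpret group G by fact
  show ?thesis using assms(2) by simp
qed

lemma vsum_list_cons: "vsum_list E (a # ws) = vplus E a (vsum_list E ws)"
  by (simp add: vsum_list_def)
lemma vsum_list_nil: "vsum_list E [] = vzero E"
  by (simp add: vsum_list_def)

lemma vsum_closed:
  assumes "normed_kvs absK E" "set ws \<subseteq> vcarrier E"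
  shows "vsum_list E ws \<in> vcarrier E"
  using assms(2) by (induction ws) (auto simp: vsum_list_def nk_zero[OF assms(1)] nk_plus[OF assms(1)])

lemma gtuples_cons: "x \<in> carrier G \<Longrightarrow> ys \<in> gtuples G k \<Longrightarrow> x # ys \<in> gtuples G (Suc k)"
  by (simp add: gtuples_def)

lemma gtuples_del:
  assumes "xs \<in> gtuples G (Suc k)" "i < k + 2"
  shows "take i xs @ drop (Suc i) xs \<in> gtuples G k"
  using assms set_take_subset[of i xs] set_drop_subset[of "Suc i" xs]
  by (auto simp: gtuples_def min_def)

lemma gtuples_map:
  assumes "group G" "g \<in> carrier G" "ys \<in> gtuples G k"
  shows "map (\<lambda>x. inv\<^bsub>G\<^esub> g \<otimes>\<^bsub>G\<^esub> x) ys \<in> gtuples G k"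
  using assms by (auto simp: gtuples_def group.inv_closed intro!: monoid.m_closed group.is_monoid)

lemma sum_list_map_upt: "sum_list (map f [0..<N]) = (\<Sum>j<N. f j)"
  by (simp add: sum_set_upt_conv_sum_list_nat[symmetric] atLeast0LessThan)

locale dir1 =
  fixes absK :: "'k::field \<Rightarrow> real" and G :: "('g, 'b) monoid_scheme"
    and E :: "('k, 'e) nspace" and actE and V :: "('k, 'v) nspace" and actV and T and m
  assumes na: "nonarch_abs absK" and grp: "group G"
    and nmE: "normed_module absK G E actE" and nmV: "normed_module absK G V actV"
    and iso: "iso_G_isometric absK G E actE (dual_space absK V) (dual_act G V actV) T"
    and mean: "normed_mean absK G m"
    and minv: "\<forall>g\<in>carrier G. \<forall>f\<in>Cb absK G. m (left_translate G g f) = m f"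

context dir1 begin

lemma nkE: "normed_kvs absK E" using nmE by (rule nm_kvs)
lemma nkV: "normed_kvs absK V" using nmV by (rule nm_kvs)

lemma T_bij: "bij_betw T (vcarrier E) (bounded_functionals absK V)"
  using iso by (simp add: iso_G_isometric_def dual_space_def)
lemma T_in: "x \<in> vcarrier E \<Longrightarrow> T x \<in> bounded_functionals absK V"
  using T_bij bij_betwE by blast
lemma T_plus: "x \<in> vcarrier E \<Longrightarrow> y \<in> vcarrier E \<Longrightarrow> T (vplus E x y) = (\<lambda>v. T x v + T y v)"
  using iso by (simp add: iso_G_isometric_def dual_space_def)
lemma T_scale: "x \<in> vcarrier E \<Longrightarrow> T (vscale E a x) = (\<lambda>v. a * T x v)"
  using iso by (simp add: iso_G_isometric_def dual_space_def)
lemma T_norm: "x \<in> vcarrier E \<Longrightarrow> op_norm absK V (T x) = vnorm E x"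
  using iso by (simp add: iso_G_isometric_def dual_space_def)
lemma T_act: "g \<in> carrier G \<Longrightarrow> x \<in> vcarrier E \<Longrightarrow> T (actE g x) = dual_act G V actV g (T x)"
  using iso by (simp add: iso_G_isometric_def)
lemma T_inj: "x \<in> vcarrier E \<Longrightarrow> y \<in> vcarrier E \<Longrightarrow> T x = T y \<Longrightarrow> x = y"
  using T_bij by (metis bij_betw_inv_into_left)
lemma Tinv_in: "l \<in> bounded_functionals absK V \<Longrightarrow> inv_into (vcarrier E) T l \<in> vcarrier E"
  using T_bij by (metis bij_betw_def inv_into_into)
lemma T_Tinv: "l \<in> bounded_functionals absK V \<Longrightarrow> T (inv_into (vcarrier E) T l) = l"
  using T_bij by (metis bij_betw_inv_into_right)

lemma T_zero: "T (vzero E) = (\<lambda>v. 0)"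
proof -
  have z: "vzero E \<in> vcarrier E" by (rule nk_zero[OF nkE])
  have "vplus E (vzero E) (vzero E) = vzero E" using kvs_zero_plus nkE unfolding normed_kvs_def by blast
  then have "T (vzero E) = (\<lambda>v. T (vzero E) v + T (vzero E) v)" using T_plus[OF z z] by simp
  then show ?thesis by (metis (no_types) add_cancel_right_right)
qed

lemma T_vsum_eval:
  "set ws \<subseteq> vcarrier E \<Longrightarrow> T (vsum_list E ws) v = sum_list (map (\<lambda>w. T w v) ws)"
proof (induction ws)
  case Nil then show ?case by (simp add: vsum_list_nil T_zero)
next
  case (Cons a ws)
  then show ?case using T_plus vsum_closed[OF nkE] by (simp add: vsum_list_cons)
qed

lemma T_vsum_idx:
  assumes "\<forall>j<N. y j \<in> vcarrier E"
  shows "T (vsum_list E (map (\<lambda>j. vscale E (c j) (y j)) [0..<N])) v = (\<Sum>j<N. c j * T (y j) v)"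
proof -
  have "set (map (\<lambda>j. vscale E (c j) (y j)) [0..<N]) \<subseteq> vcarrier E"
    using assms nk_scale[OF nkE] by auto
  then have "T (vsum_list E (map (\<lambda>j. vscale E (c j) (y j)) [0..<N])) v =
     sum_list (map (\<lambda>j. T (vscale E (c j) (y j)) v) [0..<N])"
    by (simp add: T_vsum_eval comp_def)
  also have "\<dots> = sum_list (map (\<lambda>j. c j * T (y j) v) [0..<N])"
    using assms T_scale by (intro arg_cong[where f=sum_list] map_cong) auto
  finally show ?thesis by (simp add: sum_list_map_upt)
qed

lemma m_add: "f \<in> Cb absK G \<Longrightarrow> h \<in> Cb absK G \<Longrightarrow> m (\<lambda>x. f x + h x) = m f + m h"
  using mean by (simp add: normed_mean_def)
lemma m_scale: "f \<in> Cb absK G \<Longrightarrow> m (\<lambda>x. a * f x) = a * m f"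
  using mean by (simp add: normed_mean_def)
lemma m_ind: "m (indicator_G G) = 1"
  using mean by (simp add: normed_mean_def)

lemma Cb_add: "f \<in> Cb absK G \<Longrightarrow> h \<in> Cb absK G \<Longrightarrow> (\<lambda>x. f x + h x) \<in> Cb absK G"
proof -
  assume f: "f \<in> Cb absK G" and h: "h \<in> Cb absK G"
  obtain C1 where C1: "\<forall>x\<in>carrier G. absK (f x) \<le> C1" using f by (auto simp: Cb_def)
  obtain C2 where C2: "\<forall>x\<in>carrier G. absK (h x) \<le> C2" using h by (auto simp: Cb_def)
  have "\<forall>x\<in>carrier G. absK (f x + h x) \<le> max C1 C2"
    using C1 C2 na_ultra[OF na] by (meson max.mono order_trans)
  then show ?thesis using f h by (auto simp: Cb_def)
qed

lemma Cb_scale: "f \<in> Cb absK G \<Longrightarrow> (\<lambda>x. a * f x) \<in> Cb absK G"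
proof -
  assume f: "f \<in> Cb absK G"
  obtain C1 where C1: "\<forall>x\<in>carrier G. absK (f x) \<le> C1" using f by (auto simp: Cb_def)
  have "\<forall>x\<in>carrier G. absK (a * f x) \<le> absK a * C1"
    using C1 na_mult[OF na] na_nonneg[OF na] by (simp add: mult_left_mono)
  then show ?thesis using f by (auto simp: Cb_def)
qed

lemma ind_Cb: "indicator_G G \<in> Cb absK G"
  unfolding Cb_def indicator_G_def using na_one[OF na]
  by (auto intro!: exI[of _ 1])

lemma m_zero: "m (\<lambda>x. 0) = 0"
  using m_scale[OF ind_Cb, of 0] by simp

lemma m_sum:
  assumes "finite I" "\<forall>i\<in>I. F i \<in> Cb absK G"
  shows "m (\<lambda>x. \<Sum>i\<in>I. F i x) = (\<Sum>i\<in>I. m (F i))"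
  using assms
proof (induction I rule: finite_induct)
  case empty then show ?case by (simp add: m_zero)
next
  case (insert a I)
  have s: "(\<lambda>x. \<Sum>i\<in>I. F i x) \<in> Cb absK G"
    using insert(1) insert(4)
  proof (induction I rule: finite_induct)
    case empty then show ?case using Cb_scale[OF ind_Cb, of 0] by simp
  next
    case (insert b J) then show ?case using Cb_add by simp
  qed
  show ?case using insert m_add[OF _ s, of "F a"] by simp
qed

lemma m_const: "m (\<lambda>x. if x \<in> carrier G then c else 0) = c"
proof -
  have "(\<lambda>x. if x \<in> carrier G then c else 0) = (\<lambda>x. c * indicator_G G x)"
    by (auto simp: indicator_G_def)
  then show ?thesis using m_scale[OF ind_Cb, of c] m_ind by simp
qed

lemma m_bound: "\<exists>C\<ge>0. \<forall>f\<in>Cb absK G. absK (m f) \<le> C * sup_norm absK G f"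
  using mean by (simp add: normed_mean_def)

lemma sup_norm_le:
  assumes "\<forall>x\<in>carrier G. absK (f x) \<le> B"
  shows "sup_norm absK G f \<le> B"
proof -
  have "carrier G \<noteq> {}" using grp group.is_monoid monoid.one_closed by blast
  then show ?thesis unfolding sup_norm_def using assms by (intro cSup_least) auto
qed

end

definition phi where "phi G T f ys v = (\<lambda>x. if x \<in> carrier G then T (f (x # ys)) v else 0)"
definition psi where "psi G V T m f ys = (\<lambda>v. if v \<in> vcarrier V then m (phi G T f ys v) else 0)"
definition Kf where "Kf G E V T m f k ys =
  (if ys \<in> gtuples G k then inv_into (vcarrier E) T (psi G V T m f ys) else vzero E)"

context dir1 begin

context
  fixes f k
  assumes finv: "f \<in> inv_bcochains G E actE (Suc k)"
    and fcoc: "coboundary G E (Suc k) f = (\<lambda>xs. vzero E)"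
begin

lemma f_bc: "f \<in> bcochains G E (Suc k)" using finv by (simp add: inv_bcochains_def)
lemma f_in: "xs \<in> gtuples G (Suc k) \<Longrightarrow> f xs \<in> vcarrier E" using f_bc by (simp add: bcochains_def)
lemma f_out: "xs \<notin> gtuples G (Suc k) \<Longrightarrow> f xs = vzero E" using f_bc by (simp add: bcochains_def)
lemma f_inv: "g \<in> carrier G \<Longrightarrow> xs \<in> gtuples G (Suc k) \<Longrightarrow>
   actE g (f (map (\<lambda>x. inv\<^bsub>G\<^esub> g \<otimes>\<^bsub>G\<^esub> x) xs)) = f xs"
  using finv by (simp add: inv_bcochains_def)

lemma f_bound: "\<exists>B\<ge>0. \<forall>xs\<in>gtuples G (Suc k). vnorm E (f xs) \<le> B"
proof -
  obtain B where "\<forall>xs\<in>gtuples G (Suc k). vnorm E (f xs) \<le> B" using f_bc by (auto simp: bcochains_def)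
  then show ?thesis by (intro exI[of _ "max B 0"]) auto
qed

lemma phi_bound:
  assumes B: "\<forall>xs\<in>gtuples G (Suc k). vnorm E (f xs) \<le> B"
    and ys: "ys \<in> gtuples G k" and v: "v \<in> vcarrier V"
  shows "\<forall>x\<in>carrier G. absK (phi G T f ys v x) \<le> B * vnorm V v"
proof
  fix x assume x: "x \<in> carrier G"
  have xs: "x # ys \<in> gtuples G (Suc k)" using gtuples_cons[OF x ys] .
  have "absK (T (f (x # ys)) v) \<le> op_norm absK V (T (f (x # ys))) * vnorm V v"
    by (rule opn_bound[OF nkV na T_in[OF f_in[OF xs]] v])
  also have "\<dots> = vnorm E (f (x # ys)) * vnorm V v" using T_norm[OF f_in[OF xs]] by simp
  also have "\<dots> \<le> B * vnorm V v" using B xs nk_norm_nonneg[OF nkV v] by (simp add: mult_right_mono)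
  finally show "absK (phi G T f ys v x) \<le> B * vnorm V v" using x by (simp add: phi_def)
qed

lemma phi_Cb:
  assumes ys: "ys \<in> gtuples G k" and v: "v \<in> vcarrier V"
  shows "phi G T f ys v \<in> Cb absK G"
proof -
  obtain B where B: "\<forall>xs\<in>gtuples G (Suc k). vnorm E (f xs) \<le> B" using f_bound by auto
  show ?thesis using phi_bound[OF B ys v] unfolding Cb_def by (auto simp: phi_def)
qed

lemma psi_bf:
  assumes ys: "ys \<in> gtuples G k"
  shows "psi G V T m f ys \<in> bounded_functionals absK V"
proof -
  obtain B where B0: "B \<ge> 0" and B: "\<forall>xs\<in>gtuples G (Suc k). vnorm E (f xs) \<le> B" using f_bound by auto
  obtain Cm where Cm0: "Cm \<ge> 0" and Cm: "\<forall>f\<in>Cb absK G. absK (m f) \<le> Cm * sup_norm absK G f"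
    using m_bound by auto
  show ?thesis unfolding bounded_functionals_def
  proof (intro CollectI conjI ballI allI impI)
    fix x y assume x: "x \<in> vcarrier V" and y: "y \<in> vcarrier V"
    have "phi G T f ys (vplus V x y) = (\<lambda>z. phi G T f ys x z + phi G T f ys y z)"
      using bf_lin[OF T_in[OF f_in[OF gtuples_cons[OF _ ys]]] x y] by (auto simp: phi_def)
    then show "psi G V T m f ys (vplus V x y) = psi G V T m f ys x + psi G V T m f ys y"
      using x y nk_plus[OF nkV x y] m_add[OF phi_Cb[OF ys x] phi_Cb[OF ys y]] by (simp add: psi_def)
  next
    fix a x assume x: "x \<in> vcarrier V"
    have "phi G T f ys (vscale V a x) = (\<lambda>z. a * phi G T f ys x z)"
      using bf_scale[OF T_in[OF f_in[OF gtuples_cons[OF _ ys]]] x] by (auto simp: phi_def)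
    then show "psi G V T m f ys (vscale V a x) = a * psi G V T m f ys x"
      using x nk_scale[OF nkV x] m_scale[OF phi_Cb[OF ys x]] by (simp add: psi_def)
  next
    show "\<exists>C\<ge>0. \<forall>x\<in>vcarrier V. absK (psi G V T m f ys x) \<le> C * vnorm V x"
    proof (intro exI[of _ "Cm * B"] conjI ballI)
      show "0 \<le> Cm * B" using Cm0 B0 by simp
      fix x assume x: "x \<in> vcarrier V"
      have "absK (m (phi G T f ys x)) \<le> Cm * sup_norm absK G (phi G T f ys x)"
        using Cm phi_Cb[OF ys x] by blast
      also have "\<dots> \<le> Cm * (B * vnorm V x)"
        using sup_norm_le[OF phi_bound[OF B ys x]] Cm0 by (simp add: mult_left_mono)
      finally show "absK (psi G V T m f ys x) \<le> Cm * B * vnorm V x" using x by (simp add: psi_def mult.assoc)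
    qed
  next
    fix x assume "x \<notin> vcarrier V" then show "psi G V T m f ys x = 0" by (simp add: psi_def)
  qed
qed

lemma Kf_in: "Kf G E V T m f k ys \<in> vcarrier E"
  using Tinv_in[OF psi_bf] nk_zero[OF nkE] by (auto simp: Kf_def)

lemma T_Kf: "ys \<in> gtuples G k \<Longrightarrow> T (Kf G E V T m f k ys) = psi G V T m f ys"
  using T_Tinv[OF psi_bf] by (simp add: Kf_def)

lemma psi_bound: "\<exists>C\<ge>0. \<forall>ys\<in>gtuples G k. \<forall>v\<in>vcarrier V. absK (psi G V T m f ys v) \<le> C * vnorm V v"
proof -
  obtain B where B0: "B \<ge> 0" and B: "\<forall>xs\<in>gtuples G (Suc k). vnorm E (f xs) \<le> B" using f_bound by auto
  obtain Cm where Cm0: "Cm \<ge> 0" and Cm: "\<forall>f\<in>Cb absK G. absK (m f) \<le> Cm * sup_norm absK G f"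
    using m_bound by auto
  show ?thesis
  proof (intro exI[of _ "Cm * B"] conjI ballI)
    show "0 \<le> Cm * B" using Cm0 B0 by simp
    fix ys x assume ys: "ys \<in> gtuples G k" and x: "x \<in> vcarrier V"
    have "absK (m (phi G T f ys x)) \<le> Cm * sup_norm absK G (phi G T f ys x)"
      using Cm phi_Cb[OF ys x] by blast
    also have "\<dots> \<le> Cm * (B * vnorm V x)"
      using sup_norm_le[OF phi_bound[OF B ys x]] Cm0 by (simp add: mult_left_mono)
    finally show "absK (psi G V T m f ys x) \<le> Cm * B * vnorm V x" using x by (simp add: psi_def mult.assoc)
  qed
qed

lemma Kf_bc: "Kf G E V T m f k \<in> bcochains G E k"
proof -
  obtain C where C0: "C \<ge> 0" and C: "\<forall>ys\<in>gtuples G k. \<forall>v\<in>vcarrier V. absK (psi G V T m f ys v) \<le> C * vnorm V v"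
    using psi_bound by auto
  have "\<forall>ys\<in>gtuples G k. vnorm E (Kf G E V T m f k ys) \<le> C"
  proof
    fix ys assume ys: "ys \<in> gtuples G k"
    have "vnorm E (Kf G E V T m f k ys) = op_norm absK V (psi G V T m f ys)"
      by (metis T_norm Kf_in T_Kf ys)
    also have "\<dots> \<le> C" using C0 C ys by (intro opn_le) auto
    finally show "vnorm E (Kf G E V T m f k ys) \<le> C" .
  qed
  then show ?thesis unfolding bcochains_def using Kf_in
    by (intro CollectI conjI ballI allI impI exI[of _ C]) (auto simp: Kf_def Tinv_in[OF psi_bf])
qed

lemma psi_inv:
  assumes g: "g \<in> carrier G" and ys: "ys \<in> gtuples G k"
  shows "dual_act G V actV g (psi G V T m f (map (\<lambda>x. inv\<^bsub>G\<^esub> g \<otimes>\<^bsub>G\<^esub> x) ys)) = psi G V T m f ys"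
proof
  fix v
  let ?ys' = "map (\<lambda>x. inv\<^bsub>G\<^esub> g \<otimes>\<^bsub>G\<^esub> x) ys"
  have ig: "inv\<^bsub>G\<^esub> g \<in> carrier G" using grp g by simp
  have ys': "?ys' \<in> gtuples G k" by (rule gtuples_map[OF grp g ys])
  show "dual_act G V actV g (psi G V T m f ?ys') v = psi G V T m f ys v"
  proof (cases "v \<in> vcarrier V")
    case False then show ?thesis by (simp add: dual_act_def psi_def)
  next
    case True
    have av: "actV (inv\<^bsub>G\<^esub> g) v \<in> vcarrier V" using nm_closed[OF nmV ig True] .
    have eq: "phi G T f ?ys' (actV (inv\<^bsub>G\<^esub> g) v) = left_translate G (inv\<^bsub>G\<^esub> g) (phi G T f ys v)"
    proof
      fix x show "phi G T f ?ys' (actV (inv\<^bsub>G\<^esub> g) v) x = left_translate G (inv\<^bsub>G\<^esub> g) (phi G T f ys v) x"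
      proof (cases "x \<in> carrier G")
        case False then show ?thesis by (simp add: phi_def left_translate_def)
      next
        case x: True
        have gx: "g \<otimes>\<^bsub>G\<^esub> x \<in> carrier G" using grp g x by (simp add: group.is_monoid monoid.m_closed)
        have gxys: "(g \<otimes>\<^bsub>G\<^esub> x) # ys \<in> gtuples G (Suc k)" by (rule gtuples_cons[OF gx ys])
        have mp: "map (\<lambda>y. inv\<^bsub>G\<^esub> g \<otimes>\<^bsub>G\<^esub> y) ((g \<otimes>\<^bsub>G\<^esub> x) # ys) = x # ?ys'"
          using grp_cancel1[OF grp g x] by simp
        have xys': "x # ?ys' \<in> gtuples G (Suc k)" by (rule gtuples_cons[OF x ys'])
        have "T (f ((g \<otimes>\<^bsub>G\<^esub> x) # ys)) = T (actE g (f (x # ?ys')))"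
          using f_inv[OF g gxys] mp by simp
        also have "\<dots> = dual_act G V actV g (T (f (x # ?ys')))" by (rule T_act[OF g f_in[OF xys']])
        finally have "T (f ((g \<otimes>\<^bsub>G\<^esub> x) # ys)) v = T (f (x # ?ys')) (actV (inv\<^bsub>G\<^esub> g) v)"
          using True by (simp add: dual_act_def)
        then show ?thesis using x gx grp_inv_inv[OF grp g] by (simp add: phi_def left_translate_def)
      qed
    qed
    have "dual_act G V actV g (psi G V T m f ?ys') v = m (phi G T f ?ys' (actV (inv\<^bsub>G\<^esub> g) v))"
      using True av by (simp add: dual_act_def psi_def)
    also have "\<dots> = m (phi G T f ys v)" using eq minv ig phi_Cb[OF ys True] by simp
    finally show ?thesis using True by (simp add: psi_def)
  qed
qed

lemma Kf_inv: "Kf G E V T m f k \<in> inv_bcochains G E actE k"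
  unfolding inv_bcochains_def
proof (intro CollectI conjI Kf_bc ballI)
  fix g ys assume g: "g \<in> carrier G" and ys: "ys \<in> gtuples G k"
  let ?ys' = "map (\<lambda>x. inv\<^bsub>G\<^esub> g \<otimes>\<^bsub>G\<^esub> x) ys"
  have ys': "?ys' \<in> gtuples G k" by (rule gtuples_map[OF grp g ys])
  have "T (actE g (Kf G E V T m f k ?ys')) = T (Kf G E V T m f k ys)"
    using T_act[OF g Kf_in] T_Kf[OF ys'] T_Kf[OF ys] psi_inv[OF g ys] by simp
  then show "actE g (Kf G E V T m f k ?ys') = Kf G E V T m f k ys"
    using T_inj nm_closed[OF nmE g Kf_in] Kf_in by blast
qed

lemma cocycle_id:
  assumes xs: "xs \<in> gtuples G (Suc k)" and x: "x \<in> carrier G"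
  shows "T (f xs) v = (\<Sum>i<k+2. (-1)^i * T (f (x # (take i xs @ drop (Suc i) xs))) v)"
proof -
  have xxs: "x # xs \<in> gtuples G (Suc (Suc k))" by (rule gtuples_cons[OF x xs])
  let ?y = "\<lambda>j. f (take j (x # xs) @ drop (Suc j) (x # xs))"
  have yin: "\<forall>j<Suc k + 2. ?y j \<in> vcarrier E"
    using gtuples_del[OF xxs] f_in by simp
  have "coboundary G E (Suc k) f (x # xs) = vzero E" using fcoc by simp
  then have "vsum_list E (map (\<lambda>j. vscale E ((-1)^j) (?y j)) [0..<Suc k + 2]) = vzero E"
    using xxs by (simp add: coboundary_def)
  then have "(\<Sum>j<Suc k + 2. (-1)^j * T (?y j) v) = 0"
    using T_vsum_idx[OF yin, of "\<lambda>j. (-1)^j" v] T_zero by simp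
  then have "(\<Sum>j<Suc (k + 2). (-1)^j * T (?y j) v) = 0" by simp
  then have "T (f xs) v + (\<Sum>i<k+2. (-1)^(Suc i) * T (?y (Suc i)) v) = 0"
    by (simp only: sum.lessThan_Suc_shift) simp
  moreover have "(\<Sum>i<k+2. (-1)^(Suc i) * T (?y (Suc i)) v) =
     - (\<Sum>i<k+2. (-1)^i * T (f (x # (take i xs @ drop (Suc i) xs))) v)"
    by (simp del: sum.lessThan_Suc add: sum_negf[symmetric])
  ultimately have "T (f xs) v + - (\<Sum>i<k+2. (-1)^i * T (f (x # (take i xs @ drop (Suc i) xs))) v) = 0"
    by (simp only:)
  then show ?thesis by (simp only: add_uminus_conv_diff eq_iff_diff_eq_0[symmetric])
qed

lemma Kf_cob: "coboundary G E k (Kf G E V T m f k) = f"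
proof
  fix xs
  show "coboundary G E k (Kf G E V T m f k) xs = f xs"
  proof (cases "xs \<in> gtuples G (Suc k)")
    case False then show ?thesis by (simp add: coboundary_def f_out)
  next
    case xs: True
    let ?xi = "\<lambda>i. take i xs @ drop (Suc i) xs"
    let ?L = "vsum_list E (map (\<lambda>i. vscale E ((-1)^i) (Kf G E V T m f k (?xi i))) [0..<k+2])"
    have L: "coboundary G E k (Kf G E V T m f k) xs = ?L" using xs by (simp add: coboundary_def)
    have Lin: "?L \<in> vcarrier E"
      by (rule vsum_closed[OF nkE]) (auto simp del: upt_Suc intro!: nk_scale[OF nkE] Kf_in)
    have "T ?L = T (f xs)"
    proof
      fix v
      show "T ?L v = T (f xs) v"
      proof (cases "v \<in> vcarrier V")
        case False then show ?thesis using bf_out[OF T_in[OF Lin] False] bf_out[OF T_in[OF f_in[OF xs]] False] by simp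
      next
        case v: True
        have "T ?L v = (\<Sum>i<k+2. (-1)^i * T (Kf G E V T m f k (?xi i)) v)"
          by (rule T_vsum_idx) (simp add: Kf_in)
        also have "\<dots> = (\<Sum>i<k+2. (-1)^i * m (phi G T f (?xi i) v))"
          using T_Kf gtuples_del[OF xs] v by (simp add: psi_def)
        also have "\<dots> = (\<Sum>i<k+2. m (\<lambda>x. (-1)^i * phi G T f (?xi i) v x))"
          using m_scale phi_Cb gtuples_del[OF xs] v by simp
        also have "\<dots> = m (\<lambda>x. \<Sum>i<k+2. (-1)^i * phi G T f (?xi i) v x)"
          by (rule m_sum[symmetric]) (use Cb_scale phi_Cb gtuples_del[OF xs] v in auto)
        also have "(\<lambda>x. \<Sum>i<k+2. (-1)^i * phi G T f (?xi i) v x) = (\<lambda>x. if x \<in> carrier G then T (f xs) v else 0)"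
          using cocycle_id[OF xs] by (auto simp: phi_def)
        also have "m \<dots> = T (f xs) v" by (rule m_const)
        finally show ?thesis .
      qed
    qed
    then show ?thesis using L T_inj Lin f_in[OF xs] by simp
  qed
qed

end
end

lemma direction1:
  assumes na: "nonarch_abs absK" and grp: "group G" and am: "normed_amenable absK G"
    and dm: "dual_module_of absK G E actE V actV" and n: "n \<ge> 1"
  shows "Hb_vanishes G E actE n"
proof -
  obtain m where mean: "normed_mean absK G m"
    and minv: "\<forall>g\<in>carrier G. \<forall>f\<in>Cb absK G. m (left_translate G g f) = m f"
    using am by (auto simp: normed_amenable_def)
  obtain T where iso: "iso_G_isometric absK G E actE (dual_space absK V) (dual_act G V actV) T"
    and nmE: "normed_module absK G E actE" and nmV: "normed_module absK G V actV"
    using dm by (auto simp: dual_module_of_def)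
  interpret d: dir1 absK G E actE V actV T m
    unfolding dir1_def using na grp nmE nmV iso mean minv by blast
  obtain k where k: "n = Suc k" using n by (cases n) auto
  show ?thesis unfolding Hb_vanishes_def k
  proof (intro ballI impI)
    fix f assume f: "f \<in> inv_bcochains G E actE (Suc k)"
      and c: "coboundary G E (Suc k) f = (\<lambda>xs. vzero E)"
    show "\<exists>h\<in>inv_bcochains G E actE (Suc k - 1). coboundary G E (Suc k - 1) h = f"
      using d.Kf_inv[OF f c] d.Kf_cob[OF f c] by auto
  qed
qed

definition cls :: "('k::field \<Rightarrow> real) \<Rightarrow> ('g, 'b) monoid_scheme \<Rightarrow> ('g \<Rightarrow> 'k) \<Rightarrow> ('g \<Rightarrow> 'k) set" where
  "cls absK G f = {h \<in> Cb absK G. \<exists>c. \<forall>x\<in>carrier G. h x = f x + c}"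

definition rep :: "('g \<Rightarrow> 'k) set \<Rightarrow> ('g \<Rightarrow> 'k)" where
  "rep A = (SOME f. f \<in> A)"

definition QV :: "('k::field \<Rightarrow> real) \<Rightarrow> ('g, 'b) monoid_scheme \<Rightarrow> ('k, ('g \<Rightarrow> 'k) set) nspace" where
  "QV absK G = \<lparr> vcarrier = cls absK G ` Cb absK G,
     vzero = cls absK G (\<lambda>x. 0),
     vplus = (\<lambda>A B. cls absK G (\<lambda>x. rep A x + rep B x)),
     vscale = (\<lambda>a A. cls absK G (\<lambda>x. a * rep A x)),
     vnorm = (\<lambda>A. Inf (sup_norm absK G ` A)) \<rparr>"

definition Qact :: "('k::field \<Rightarrow> real) \<Rightarrow> ('g, 'b) monoid_scheme \<Rightarrow> 'g \<Rightarrow> ('g \<Rightarrow> 'k) set \<Rightarrow> ('g \<Rightarrow> 'k) set" where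
  "Qact absK G g A = cls absK G (left_translate G g (rep A))"

locale dir2 =
  fixes absK :: "'k::field \<Rightarrow> real" and G :: "('g, 'b) monoid_scheme"
  assumes na: "nonarch_abs absK" and grp: "group G"

context dir2 begin

lemma one_in: "\<one>\<^bsub>G\<^esub> \<in> carrier G" using grp by (simp add: group.is_monoid monoid.one_closed)
lemma carrier_ne: "carrier G \<noteq> {}" using one_in by blast

lemma Cb_add: "f \<in> Cb absK G \<Longrightarrow> h \<in> Cb absK G \<Longrightarrow> (\<lambda>x. f x + h x) \<in> Cb absK G"
proof -
  assume f: "f \<in> Cb absK G" and h: "h \<in> Cb absK G"
  obtain C1 where C1: "\<forall>x\<in>carrier G. absK (f x) \<le> C1" using f by (auto simp: Cb_def)
  obtain C2 where C2: "\<forall>x\<in>carrier G. absK (h x) \<le> C2" using h by (auto simp: Cb_def)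
  have "\<forall>x\<in>carrier G. absK (f x + h x) \<le> max C1 C2"
    using C1 C2 na_ultra[OF na] by (meson max.mono order_trans)
  then show ?thesis using f h by (auto simp: Cb_def)
qed

lemma Cb_scale: "f \<in> Cb absK G \<Longrightarrow> (\<lambda>x. a * f x) \<in> Cb absK G"
proof -
  assume f: "f \<in> Cb absK G"
  obtain C1 where C1: "\<forall>x\<in>carrier G. absK (f x) \<le> C1" using f by (auto simp: Cb_def)
  have "\<forall>x\<in>carrier G. absK (a * f x) \<le> absK a * C1"
    using C1 na_mult[OF na] na_nonneg[OF na] by (simp add: mult_left_mono)
  then show ?thesis using f by (auto simp: Cb_def)
qed

lemma Cb_zero: "(\<lambda>x. 0) \<in> Cb absK G"
  unfolding Cb_def using na_zero[OF na, of 0] by auto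

lemma Cb_out: "f \<in> Cb absK G \<Longrightarrow> x \<notin> carrier G \<Longrightarrow> f x = 0"
  by (simp add: Cb_def)

lemma Cb_bdd: "f \<in> Cb absK G \<Longrightarrow> \<exists>C. \<forall>x\<in>carrier G. absK (f x) \<le> C"
  by (simp add: Cb_def)

lemma lt_Cb: "g \<in> carrier G \<Longrightarrow> f \<in> Cb absK G \<Longrightarrow> left_translate G g f \<in> Cb absK G"
proof -
  assume g: "g \<in> carrier G" and f: "f \<in> Cb absK G"
  obtain C where C: "\<forall>x\<in>carrier G. absK (f x) \<le> C" using Cb_bdd[OF f] by auto
  have "\<forall>x\<in>carrier G. absK (left_translate G g f x) \<le> C"
    using C grp g by (auto simp: left_translate_def group.inv_closed group.is_monoid monoid.m_closed)
  then show ?thesis by (auto simp: Cb_def left_translate_def)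
qed

lemma sup_le: "\<forall>x\<in>carrier G. absK (f x) \<le> B \<Longrightarrow> sup_norm absK G f \<le> B"
  unfolding sup_norm_def using carrier_ne by (intro cSup_least) auto

lemma sup_ge: "f \<in> Cb absK G \<Longrightarrow> x \<in> carrier G \<Longrightarrow> absK (f x) \<le> sup_norm absK G f"
proof -
  assume f: "f \<in> Cb absK G" and x: "x \<in> carrier G"
  obtain C where C: "\<forall>x\<in>carrier G. absK (f x) \<le> C" using Cb_bdd[OF f] by auto
  show ?thesis unfolding sup_norm_def
    by (rule cSup_upper) (use x C in \<open>auto intro: bdd_aboveI[where M=C]\<close>)
qed

lemma sup_nonneg: "f \<in> Cb absK G \<Longrightarrow> sup_norm absK G f \<ge> 0"
  using sup_ge[OF _ one_in] na_nonneg[OF na] by (meson order_trans)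

lemma mem_cls: "h \<in> cls absK G f \<longleftrightarrow> h \<in> Cb absK G \<and> (\<exists>c. \<forall>x\<in>carrier G. h x = f x + c)"
  by (simp add: cls_def)

lemma cls_self: "f \<in> Cb absK G \<Longrightarrow> f \<in> cls absK G f"
  by (auto simp: mem_cls intro: exI[of _ 0])

lemma cls_eqI:
  assumes "\<forall>x\<in>carrier G. g x = f x + c"
  shows "cls absK G f = cls absK G g"
proof
  show "cls absK G f \<subseteq> cls absK G g"
  proof
    fix h assume "h \<in> cls absK G f"
    then obtain d where "h \<in> Cb absK G" "\<forall>x\<in>carrier G. h x = f x + d" by (auto simp: mem_cls)
    then show "h \<in> cls absK G g" using assms by (auto simp: mem_cls intro!: exI[of _ "d - c"])
  qed
  show "cls absK G g \<subseteq> cls absK G f"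
  proof
    fix h assume "h \<in> cls absK G g"
    then obtain d where "h \<in> Cb absK G" "\<forall>x\<in>carrier G. h x = g x + d" by (auto simp: mem_cls)
    then show "h \<in> cls absK G f" using assms by (auto simp: mem_cls intro!: exI[of _ "c + d"])
  qed
qed

lemma rep_cls:
  assumes f: "f \<in> Cb absK G"
  shows "rep (cls absK G f) \<in> Cb absK G \<and> (\<exists>c. \<forall>x\<in>carrier G. rep (cls absK G f) x = f x + c)"
proof -
  have "rep (cls absK G f) \<in> cls absK G f"
    unfolding rep_def by (rule someI[of _ f]) (rule cls_self[OF f])
  then show ?thesis by (simp add: mem_cls)
qed

lemma rep_diff:
  assumes f: "f \<in> Cb absK G" and x: "x \<in> carrier G" and y: "y \<in> carrier G"
  shows "rep (cls absK G f) y - rep (cls absK G f) x = f y - f x"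
  using rep_cls[OF f] x y by auto

lemma cls_rep:
  assumes f: "f \<in> Cb absK G"
  shows "cls absK G (rep (cls absK G f)) = cls absK G f"
proof -
  obtain c where "\<forall>x\<in>carrier G. rep (cls absK G f) x = f x + c" using rep_cls[OF f] by auto
  then show ?thesis using cls_eqI by metis
qed

lemma Q_plus: "f \<in> Cb absK G \<Longrightarrow> h \<in> Cb absK G \<Longrightarrow>
   vplus (QV absK G) (cls absK G f) (cls absK G h) = cls absK G (\<lambda>x. f x + h x)"
proof -
  assume f: "f \<in> Cb absK G" and h: "h \<in> Cb absK G"
  obtain c where c: "\<forall>x\<in>carrier G. rep (cls absK G f) x = f x + c" using rep_cls[OF f] by auto
  obtain d where d: "\<forall>x\<in>carrier G. rep (cls absK G h) x = h x + d" using rep_cls[OF h] by auto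
  show ?thesis unfolding QV_def using c d
    by (simp, intro cls_eqI[where c="-(c+d)"]) (simp add: algebra_simps)
qed

lemma Q_scale: "f \<in> Cb absK G \<Longrightarrow>
   vscale (QV absK G) a (cls absK G f) = cls absK G (\<lambda>x. a * f x)"
proof -
  assume f: "f \<in> Cb absK G"
  obtain c where c: "\<forall>x\<in>carrier G. rep (cls absK G f) x = f x + c" using rep_cls[OF f] by auto
  show ?thesis unfolding QV_def using c
    by (simp, intro cls_eqI[where c="-(a*c)"]) (simp add: algebra_simps)
qed

lemma Q_act: "g \<in> carrier G \<Longrightarrow> f \<in> Cb absK G \<Longrightarrow>
   Qact absK G g (cls absK G f) = cls absK G (left_translate G g f)"
proof -
  assume g: "g \<in> carrier G" and f: "f \<in> Cb absK G"
  obtain c where c: "\<forall>x\<in>carrier G. rep (cls absK G f) x = f x + c" using rep_cls[OF f] by auto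
  have "\<forall>x\<in>carrier G. left_translate G g f x = left_translate G g (rep (cls absK G f)) x + (-c)"
    using c grp g by (auto simp: left_translate_def group.inv_closed group.is_monoid monoid.m_closed)
  then show ?thesis unfolding Qact_def by (rule cls_eqI)
qed

lemma Q_carrier: "A \<in> vcarrier (QV absK G) \<longleftrightarrow> (\<exists>f\<in>Cb absK G. A = cls absK G f)"
  by (auto simp: QV_def)

lemma Q_zero: "vzero (QV absK G) = cls absK G (\<lambda>x. 0)"
  by (simp add: QV_def)

lemma cls_in: "f \<in> Cb absK G \<Longrightarrow> cls absK G f \<in> vcarrier (QV absK G)"
  by (auto simp: QV_def)


lemma Q_kvs: "kvs (QV absK G)"
  unfolding kvs_def
proof (intro conjI ballI allI)
  show "vzero (QV absK G) \<in> vcarrier (QV absK G)" by (simp add: Q_zero cls_in Cb_zero)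
next
  fix A B assume "A \<in> vcarrier (QV absK G)" "B \<in> vcarrier (QV absK G)"
  then show "vplus (QV absK G) A B \<in> vcarrier (QV absK G)"
    by (auto simp: Q_carrier Q_plus cls_in Cb_add)
next
  fix a A assume "A \<in> vcarrier (QV absK G)"
  then show "vscale (QV absK G) a A \<in> vcarrier (QV absK G)"
    by (auto simp: Q_carrier Q_scale cls_in Cb_scale)
next
  fix A B C assume "A \<in> vcarrier (QV absK G)" "B \<in> vcarrier (QV absK G)" "C \<in> vcarrier (QV absK G)"
  then show "vplus (QV absK G) (vplus (QV absK G) A B) C = vplus (QV absK G) A (vplus (QV absK G) B C)"
    by (auto simp: Q_carrier Q_plus Cb_add add.assoc)
next
  fix A B assume "A \<in> vcarrier (QV absK G)" "B \<in> vcarrier (QV absK G)"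
  then show "vplus (QV absK G) A B = vplus (QV absK G) B A"
    by (auto simp: Q_carrier Q_plus add.commute)
next
  fix A assume "A \<in> vcarrier (QV absK G)"
  then show "vplus (QV absK G) (vzero (QV absK G)) A = A"
    by (auto simp: Q_carrier Q_plus Q_zero Cb_zero)
next
  fix A assume "A \<in> vcarrier (QV absK G)"
  then obtain f where f: "f \<in> Cb absK G" "A = cls absK G f" by (auto simp: Q_carrier)
  have nf: "(\<lambda>x. (-1) * f x) \<in> Cb absK G" by (rule Cb_scale[OF f(1)])
  show "\<exists>y\<in>vcarrier (QV absK G). vplus (QV absK G) A y = vzero (QV absK G)"
    by (rule bexI[of _ "cls absK G (\<lambda>x. (-1) * f x)"]) (use f nf in \<open>auto simp: Q_plus Q_zero cls_in\<close>)
next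
  fix a A B assume "A \<in> vcarrier (QV absK G)" "B \<in> vcarrier (QV absK G)"
  then show "vscale (QV absK G) a (vplus (QV absK G) A B) = vplus (QV absK G) (vscale (QV absK G) a A) (vscale (QV absK G) a B)"
    by (auto simp: Q_carrier Q_plus Q_scale Cb_add Cb_scale distrib_left)
next
  fix a b A assume "A \<in> vcarrier (QV absK G)"
  then show "vscale (QV absK G) (a + b) A = vplus (QV absK G) (vscale (QV absK G) a A) (vscale (QV absK G) b A)"
    by (auto simp: Q_carrier Q_plus Q_scale Cb_scale distrib_right)
next
  fix a b A assume "A \<in> vcarrier (QV absK G)"
  then show "vscale (QV absK G) (a * b) A = vscale (QV absK G) a (vscale (QV absK G) b A)"
    by (auto simp: Q_carrier Q_scale Cb_scale mult.assoc)
next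
  fix A assume "A \<in> vcarrier (QV absK G)"
  then show "vscale (QV absK G) 1 A = A"
    by (auto simp: Q_carrier Q_scale)
qed

end

context dir2 begin

abbreviation "qn A \<equiv> Inf (sup_norm absK G ` A)"

lemma Q_norm: "vnorm (QV absK G) A = qn A" by (simp add: QV_def)

lemma cls_sub: "cls absK G f \<subseteq> Cb absK G" by (auto simp: mem_cls)

lemma qn_le: "h \<in> cls absK G f \<Longrightarrow> qn (cls absK G f) \<le> sup_norm absK G h"
  by (rule cInf_lower) (use cls_sub sup_nonneg in \<open>auto intro!: bdd_belowI[where m=0]\<close>)

lemma qn_ge: "f \<in> Cb absK G \<Longrightarrow> (\<forall>h\<in>cls absK G f. B \<le> sup_norm absK G h) \<Longrightarrow> B \<le> qn (cls absK G f)"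
  by (rule cInf_greatest) (use cls_self in auto)

lemma qn_nonneg: "f \<in> Cb absK G \<Longrightarrow> 0 \<le> qn (cls absK G f)"
  using qn_ge cls_sub sup_nonneg by (meson subsetD)

lemma qn_self: "f \<in> Cb absK G \<Longrightarrow> qn (cls absK G f) \<le> sup_norm absK G f"
  using qn_le cls_self by blast

lemma sup_zero: "sup_norm absK G (\<lambda>x. 0) = 0"
  using sup_le[of "\<lambda>x. 0" 0] sup_nonneg[OF Cb_zero] na_zero[OF na, of 0] by simp

lemma qn_zero_iff:
  assumes f: "f \<in> Cb absK G"
  shows "qn (cls absK G f) = 0 \<longleftrightarrow> cls absK G f = cls absK G (\<lambda>x. 0)"
proof
  assume "cls absK G f = cls absK G (\<lambda>x. 0)"
  then have "qn (cls absK G f) \<le> 0" using qn_self[OF Cb_zero] sup_zero by simp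
  then show "qn (cls absK G f) = 0" using qn_nonneg[OF f] by simp
next
  assume q0: "qn (cls absK G f) = 0"
  have const: "f x = f y" if x: "x \<in> carrier G" and y: "y \<in> carrier G" for x y
  proof (rule ccontr)
    assume ne: "f x \<noteq> f y"
    let ?e = "absK (f x - f y)"
    have epos: "?e > 0" using ne na_zero[OF na, of "f x - f y"] na_nonneg[OF na, of "f x - f y"] by simp
    have "Inf (sup_norm absK G ` cls absK G f) < ?e" using q0 epos by simp
    then obtain s where s: "s \<in> sup_norm absK G ` cls absK G f" "s < ?e"
      using cInf_lessD[of "sup_norm absK G ` cls absK G f"] cls_self[OF f] by blast
    then obtain h where h: "h \<in> cls absK G f" "sup_norm absK G h < ?e" by auto
    obtain c where hc: "h \<in> Cb absK G" "\<forall>x\<in>carrier G. h x = f x + c" using h(1) by (auto simp: mem_cls)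
    have "f x - f y = h x - h y" using hc x y by simp
    then have "?e \<le> max (absK (h x)) (absK (h y))" using na_diff[OF na, of "h x" "h y"] by simp
    also have "\<dots> \<le> sup_norm absK G h" using sup_ge[OF hc(1) x] sup_ge[OF hc(1) y] by simp
    finally show False using h(2) by simp
  qed
  have "\<forall>x\<in>carrier G. (\<lambda>x. 0) x = f x + (- f \<one>\<^bsub>G\<^esub>)"
  proof
    fix x assume x: "x \<in> carrier G"
    show "(\<lambda>x. 0) x = f x + (- f \<one>\<^bsub>G\<^esub>)" using const[OF x one_in] by simp
  qed
  then show "cls absK G f = cls absK G (\<lambda>x. 0)" by (rule cls_eqI)
qed

lemma sup_add: "f \<in> Cb absK G \<Longrightarrow> h \<in> Cb absK G \<Longrightarrow>
  sup_norm absK G (\<lambda>x. f x + h x) \<le> max (sup_norm absK G f) (sup_norm absK G h)"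
  using na_ultra[OF na] sup_ge by (intro sup_le) (meson max.mono order_trans)

lemma qn_ultra:
  assumes f: "f \<in> Cb absK G" and h: "h \<in> Cb absK G"
  shows "qn (cls absK G (\<lambda>x. f x + h x)) \<le> max (qn (cls absK G f)) (qn (cls absK G h))"
proof (rule ccontr)
  let ?N = "qn (cls absK G (\<lambda>x. f x + h x))"
  assume "\<not> ?thesis"
  then have lt1: "qn (cls absK G f) < ?N" and lt2: "qn (cls absK G h) < ?N" by auto
  obtain s where s: "s \<in> sup_norm absK G ` cls absK G f" "s < ?N"
    using cInf_lessD[OF _ lt1] cls_self[OF f] by blast
  then obtain f' where f': "f' \<in> cls absK G f" "sup_norm absK G f' < ?N" by auto
  obtain t where t: "t \<in> sup_norm absK G ` cls absK G h" "t < ?N"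
    using cInf_lessD[OF _ lt2] cls_self[OF h] by blast
  then obtain h' where h': "h' \<in> cls absK G h" "sup_norm absK G h' < ?N" by auto
  obtain c where c: "f' \<in> Cb absK G" "\<forall>x\<in>carrier G. f' x = f x + c" using f'(1) by (auto simp: mem_cls)
  obtain d where d: "h' \<in> Cb absK G" "\<forall>x\<in>carrier G. h' x = h x + d" using h'(1) by (auto simp: mem_cls)
  have "(\<lambda>x. f' x + h' x) \<in> cls absK G (\<lambda>x. f x + h x)"
    using c d Cb_add by (auto simp: mem_cls intro!: exI[of _ "c + d"])
  then have "?N \<le> sup_norm absK G (\<lambda>x. f' x + h' x)" by (rule qn_le)
  also have "\<dots> \<le> max (sup_norm absK G f') (sup_norm absK G h')" by (rule sup_add[OF c(1) d(1)])
  finally show False using f'(2) h'(2) by simp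
qed

lemma sup_scale: "f \<in> Cb absK G \<Longrightarrow> sup_norm absK G (\<lambda>x. a * f x) \<le> absK a * sup_norm absK G f"
  using sup_ge na_mult[OF na] na_nonneg[OF na] by (intro sup_le) (simp add: mult_left_mono)

lemma qn_scale_le:
  assumes f: "f \<in> Cb absK G"
  shows "qn (cls absK G (\<lambda>x. a * f x)) \<le> absK a * qn (cls absK G f)"
proof -
  have all: "qn (cls absK G (\<lambda>x. a * f x)) \<le> absK a * sup_norm absK G h" if h: "h \<in> cls absK G f" for h
  proof -
    obtain c where c: "h \<in> Cb absK G" "\<forall>x\<in>carrier G. h x = f x + c" using h by (auto simp: mem_cls)
    have "(\<lambda>x. a * h x) \<in> cls absK G (\<lambda>x. a * f x)"
      using c Cb_scale by (auto simp: mem_cls algebra_simps intro!: exI[of _ "a * c"])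
    then have "qn (cls absK G (\<lambda>x. a * f x)) \<le> sup_norm absK G (\<lambda>x. a * h x)" by (rule qn_le)
    also have "\<dots> \<le> absK a * sup_norm absK G h" by (rule sup_scale[OF c(1)])
    finally show ?thesis .
  qed
  show ?thesis
  proof (cases "a = 0")
    case True
    then show ?thesis using all[OF cls_self[OF f]] sup_nonneg[OF f] na_zero[OF na, of 0]
      qn_nonneg[OF f] by simp
  next
    case False
    then have ap: "absK a > 0" using na_zero[OF na, of a] na_nonneg[OF na, of a] by simp
    have "qn (cls absK G (\<lambda>x. a * f x)) / absK a \<le> qn (cls absK G f)"
      using all ap by (intro qn_ge[OF f]) (simp add: divide_le_eq mult.commute)
    then show ?thesis using ap by (simp add: divide_le_eq mult.commute)
  qed
qed

lemma qn_scale: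
  assumes f: "f \<in> Cb absK G"
  shows "qn (cls absK G (\<lambda>x. a * f x)) = absK a * qn (cls absK G f)"
proof (cases "a = 0")
  case True
  then have "qn (cls absK G (\<lambda>x. a * f x)) \<le> 0"
    using qn_scale_le[OF f, of a] na_zero[OF na, of 0] by simp
  then show ?thesis using True qn_nonneg[OF Cb_scale[OF f, of a]] na_zero[OF na, of 0] by simp
next
  case False
  have af: "(\<lambda>x. a * f x) \<in> Cb absK G" by (rule Cb_scale[OF f])
  have "qn (cls absK G (\<lambda>x. inverse a * (a * f x))) \<le> absK (inverse a) * qn (cls absK G (\<lambda>x. a * f x))"
    by (rule qn_scale_le[OF af])
  moreover have "(\<lambda>x. inverse a * (a * f x)) = f" using False by (simp add: field_simps)
  moreover have "absK (inverse a) * absK a = 1" using False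
    by (metis na_mult[OF na] na_one[OF na] left_inverse)
  moreover have "absK a > 0" using False na_zero[OF na, of a] na_nonneg[OF na, of a] by simp
  ultimately have h1: "qn (cls absK G f) \<le> absK (inverse a) * qn (cls absK G (\<lambda>x. a * f x))"
    and i1: "absK a * absK (inverse a) = 1" and ap: "absK a > 0" by (auto simp: mult.commute)
  have "absK a * qn (cls absK G f) \<le> absK a * (absK (inverse a) * qn (cls absK G (\<lambda>x. a * f x)))"
    using h1 ap by (intro mult_left_mono) auto
  also have "\<dots> = qn (cls absK G (\<lambda>x. a * f x))" using i1 by (simp add: mult.assoc[symmetric])
  finally have "absK a * qn (cls absK G f) \<le> qn (cls absK G (\<lambda>x. a * f x))" .
  then show ?thesis using qn_scale_le[OF f, of a] by simp
qed

lemma Q_normed_kvs: "normed_kvs absK (QV absK G)"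
  unfolding normed_kvs_def
proof (intro conjI ballI allI)
  show "kvs (QV absK G)" by (rule Q_kvs)
next
  fix A assume "A \<in> vcarrier (QV absK G)"
  then show "0 \<le> vnorm (QV absK G) A" by (auto simp: Q_carrier Q_norm qn_nonneg)
next
  fix A assume "A \<in> vcarrier (QV absK G)"
  then show "(vnorm (QV absK G) A = 0) = (A = vzero (QV absK G))"
    by (auto simp: Q_carrier Q_norm Q_zero qn_zero_iff Cb_zero)
next
  fix A B assume "A \<in> vcarrier (QV absK G)" "B \<in> vcarrier (QV absK G)"
  then show "vnorm (QV absK G) (vplus (QV absK G) A B) \<le> max (vnorm (QV absK G) A) (vnorm (QV absK G) B)"
    by (auto simp: Q_carrier Q_norm Q_plus qn_ultra)
next
  fix a A assume "A \<in> vcarrier (QV absK G)"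
  then show "vnorm (QV absK G) (vscale (QV absK G) a A) = absK a * vnorm (QV absK G) A"
    by (auto simp: Q_carrier Q_norm Q_scale qn_scale)
qed

end

context dir2 begin

lemma lt_one: "f \<in> Cb absK G \<Longrightarrow> left_translate G \<one>\<^bsub>G\<^esub> f = f"
  using grp Cb_out by (auto simp: left_translate_def fun_eq_iff monoid.inv_one[OF group.is_monoid[OF grp]]
      group.is_monoid monoid.l_one)

lemma lt_mult:
  assumes g: "g \<in> carrier G" and h: "h \<in> carrier G"
  shows "left_translate G (g \<otimes>\<^bsub>G\<^esub> h) f = left_translate G g (left_translate G h f)"
proof -
  interpret group G by (rule grp)
  show ?thesis using g h by (auto simp: left_translate_def fun_eq_iff inv_mult_group m_assoc)
qed

lemma qn_act_le:
  assumes g: "g \<in> carrier G" and f: "f \<in> Cb absK G"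
  shows "qn (cls absK G (left_translate G g f)) \<le> qn (cls absK G f)"
proof (rule qn_ge[OF f], intro ballI)
  fix h assume h: "h \<in> cls absK G f"
  obtain c where c: "h \<in> Cb absK G" "\<forall>x\<in>carrier G. h x = f x + c" using h by (auto simp: mem_cls)
  have ig: "inv\<^bsub>G\<^esub> g \<in> carrier G" using grp g by simp
  have "left_translate G g h \<in> cls absK G (left_translate G g f)"
    using c lt_Cb[OF g] grp g
    by (auto simp: mem_cls left_translate_def group.is_monoid monoid.m_closed intro!: exI[of _ c])
  then have "qn (cls absK G (left_translate G g f)) \<le> sup_norm absK G (left_translate G g h)" by (rule qn_le)
  also have "\<dots> \<le> sup_norm absK G h"
    using sup_ge[OF c(1)] ig by (intro sup_le) (auto simp: left_translate_def group.is_monoid[OF grp] monoid.m_closed)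
  finally show "qn (cls absK G (left_translate G g f)) \<le> sup_norm absK G h" .
qed

lemma qn_act:
  assumes g: "g \<in> carrier G" and f: "f \<in> Cb absK G"
  shows "qn (cls absK G (left_translate G g f)) = qn (cls absK G f)"
proof -
  have ig: "inv\<^bsub>G\<^esub> g \<in> carrier G" using grp g by simp
  have "left_translate G (inv\<^bsub>G\<^esub> g) (left_translate G g f) = f"
    using lt_mult[OF ig g, of f, symmetric] lt_one[OF f] grp g by (simp add: group.l_inv)
  then have "qn (cls absK G f) \<le> qn (cls absK G (left_translate G g f))"
    using qn_act_le[OF ig lt_Cb[OF g f]] by simp
  then show ?thesis using qn_act_le[OF g f] by simp
qed

lemma Q_module: "normed_module absK G (QV absK G) (Qact absK G)"
  unfolding normed_module_def
proof (intro conjI ballI allI)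
  show "normed_kvs absK (QV absK G)" by (rule Q_normed_kvs)
next
  fix g A assume g: "g \<in> carrier G" and "A \<in> vcarrier (QV absK G)"
  then show "Qact absK G g A \<in> vcarrier (QV absK G)"
    by (auto simp: Q_carrier Q_act lt_Cb cls_in)
next
  fix A assume "A \<in> vcarrier (QV absK G)"
  then show "Qact absK G \<one>\<^bsub>G\<^esub> A = A"
    using one_in by (auto simp: Q_carrier Q_act lt_one)
next
  fix g h A assume g: "g \<in> carrier G" and h: "h \<in> carrier G" and "A \<in> vcarrier (QV absK G)"
  then obtain f where f: "f \<in> Cb absK G" "A = cls absK G f" by (auto simp: Q_carrier)
  have gh: "g \<otimes>\<^bsub>G\<^esub> h \<in> carrier G" using grp g h by (simp add: group.is_monoid monoid.m_closed)
  show "Qact absK G (g \<otimes>\<^bsub>G\<^esub> h) A = Qact absK G g (Qact absK G h A)"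
    using f g h gh by (simp add: Q_act lt_Cb lt_mult)
next
  fix g A B assume g: "g \<in> carrier G" and "A \<in> vcarrier (QV absK G)" "B \<in> vcarrier (QV absK G)"
  then obtain f k where f: "f \<in> Cb absK G" "A = cls absK G f" and k: "k \<in> Cb absK G" "B = cls absK G k"
    by (auto simp: Q_carrier)
  have "left_translate G g (\<lambda>x. f x + k x) = (\<lambda>x. left_translate G g f x + left_translate G g k x)"
    by (auto simp: left_translate_def)
  then show "Qact absK G g (vplus (QV absK G) A B) = vplus (QV absK G) (Qact absK G g A) (Qact absK G g B)"
    using f k g by (simp add: Q_act Q_plus lt_Cb Cb_add)
next
  fix g a A assume g: "g \<in> carrier G" and "A \<in> vcarrier (QV absK G)"
  then obtain f where f: "f \<in> Cb absK G" "A = cls absK G f" by (auto simp: Q_carrier)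
  have "left_translate G g (\<lambda>x. a * f x) = (\<lambda>x. a * left_translate G g f x)"
    by (auto simp: left_translate_def)
  then show "Qact absK G g (vscale (QV absK G) a A) = vscale (QV absK G) a (Qact absK G g A)"
    using f g by (simp add: Q_act Q_scale lt_Cb Cb_scale)
next
  fix g A assume g: "g \<in> carrier G" and "A \<in> vcarrier (QV absK G)"
  then obtain f where f: "f \<in> Cb absK G" "A = cls absK G f" by (auto simp: Q_carrier)
  then show "vnorm (QV absK G) (Qact absK G g A) = vnorm (QV absK G) A"
    using g by (simp add: Q_act Q_norm qn_act)
qed

end

lemma vsum_dual: "vsum_list (dual_space absK V) ws = (\<lambda>v. sum_list (map (\<lambda>w. w v) ws))"
  by (induction ws) (auto simp: vsum_list_def dual_space_def)

lemma ds_simps: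
  "vcarrier (dual_space absK V) = bounded_functionals absK V"
  "vzero (dual_space absK V) = (\<lambda>x. 0)"
  "vplus (dual_space absK V) = (\<lambda>l m x. l x + m x)"
  "vscale (dual_space absK V) = (\<lambda>a l x. a * l x)"
  "vnorm (dual_space absK V) = op_norm absK V"
  by (simp_all add: dual_space_def)

definition Dfun where
  "Dfun absK G x y = (\<lambda>A. if A \<in> vcarrier (QV absK G) then rep A y - rep A x else 0)"

definition cc where
  "cc absK G = (\<lambda>xs. if xs \<in> gtuples G 1 then Dfun absK G (xs!0) (xs!1) else (\<lambda>A. 0))"

context dir2 begin

lemma grp_cancel2: "g \<in> carrier G \<Longrightarrow> b \<in> carrier G \<Longrightarrow> inv\<^bsub>G\<^esub> (inv\<^bsub>G\<^esub> g) \<otimes>\<^bsub>G\<^esub> (inv\<^bsub>G\<^esub> g \<otimes>\<^bsub>G\<^esub> b) = b"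
proof -
  interpret group G by (rule grp)
  assume "g \<in> carrier G" "b \<in> carrier G"
  then show ?thesis by (simp add: m_assoc[symmetric])
qed

lemma D_cls: "f \<in> Cb absK G \<Longrightarrow> x \<in> carrier G \<Longrightarrow> y \<in> carrier G \<Longrightarrow> Dfun absK G x y (cls absK G f) = f y - f x"
  using rep_diff cls_in by (simp add: Dfun_def)

lemma D_bound: "f \<in> Cb absK G \<Longrightarrow> x \<in> carrier G \<Longrightarrow> y \<in> carrier G \<Longrightarrow> absK (f y - f x) \<le> qn (cls absK G f)"
proof -
  assume f: "f \<in> Cb absK G" and x: "x \<in> carrier G" and y: "y \<in> carrier G"
  show ?thesis
  proof (rule qn_ge[OF f], intro ballI)
    fix h assume "h \<in> cls absK G f"
    then obtain c where c: "h \<in> Cb absK G" "\<forall>x\<in>carrier G. h x = f x + c" by (auto simp: mem_cls)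
    have "f y - f x = h y - h x" using c x y by simp
    then have "absK (f y - f x) \<le> max (absK (h y)) (absK (h x))" using na_diff[OF na] by simp
    also have "\<dots> \<le> sup_norm absK G h" using sup_ge[OF c(1) x] sup_ge[OF c(1) y] by simp
    finally show "absK (f y - f x) \<le> sup_norm absK G h" .
  qed
qed

lemma D_bf:
  assumes x: "x \<in> carrier G" and y: "y \<in> carrier G"
  shows "Dfun absK G x y \<in> bounded_functionals absK (QV absK G)"
  unfolding bounded_functionals_def
proof (intro CollectI conjI ballI allI impI)
  fix A B assume "A \<in> vcarrier (QV absK G)" "B \<in> vcarrier (QV absK G)"
  then obtain f k where f: "f \<in> Cb absK G" "A = cls absK G f" and k: "k \<in> Cb absK G" "B = cls absK G k"
    by (auto simp: Q_carrier)
  show "Dfun absK G x y (vplus (QV absK G) A B) = Dfun absK G x y A + Dfun absK G x y B"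
    using f k x y by (simp add: Q_plus D_cls Cb_add)
next
  fix a A assume "A \<in> vcarrier (QV absK G)"
  then obtain f where f: "f \<in> Cb absK G" "A = cls absK G f" by (auto simp: Q_carrier)
  show "Dfun absK G x y (vscale (QV absK G) a A) = a * Dfun absK G x y A"
    using f x y by (simp add: Q_scale D_cls Cb_scale algebra_simps)
next
  show "\<exists>C\<ge>0. \<forall>A\<in>vcarrier (QV absK G). absK (Dfun absK G x y A) \<le> C * vnorm (QV absK G) A"
  proof (intro exI[of _ 1] conjI ballI)
    fix A assume "A \<in> vcarrier (QV absK G)"
    then obtain f where f: "f \<in> Cb absK G" "A = cls absK G f" by (auto simp: Q_carrier)
    then show "absK (Dfun absK G x y A) \<le> 1 * vnorm (QV absK G) A"
      using x y by (simp add: D_cls D_bound Q_norm)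
  qed simp
next
  fix A assume "A \<notin> vcarrier (QV absK G)"
  then show "Dfun absK G x y A = 0" by (simp add: Dfun_def)
qed

abbreviation "EE \<equiv> dual_space absK (QV absK G)"
abbreviation "aE \<equiv> dual_act G (QV absK G) (Qact absK G)"

lemma gt1: "xs \<in> gtuples G (Suc 0) \<longleftrightarrow> (\<exists>a b. xs = [a, b] \<and> a \<in> carrier G \<and> b \<in> carrier G)"
  unfolding gtuples_def by (auto simp: length_Suc_conv)

lemma gt2: "xs \<in> gtuples G (Suc (Suc 0)) \<longleftrightarrow> (\<exists>a b d. xs = [a, b, d] \<and> a \<in> carrier G \<and> b \<in> carrier G \<and> d \<in> carrier G)"
  unfolding gtuples_def by (auto simp: length_Suc_conv)

lemma dm: "dual_module_of absK G EE aE (QV absK G) (Qact absK G)"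
  unfolding dual_module_of_def iso_G_isometric_def
proof (intro conjI exI[of _ id])
  show "normed_module absK G EE aE" by (rule dual_normed_module[OF na grp Q_module])
  show "normed_module absK G (QV absK G) (Qact absK G)" by (rule Q_module)
qed (auto simp: bij_betw_id)

lemma cc_bf: "xs \<in> gtuples G 1 \<Longrightarrow> cc absK G xs \<in> bounded_functionals absK (QV absK G)"
proof -
  assume xs: "xs \<in> gtuples G 1"
  then obtain a b where ab: "xs = [a, b]" "a \<in> carrier G" "b \<in> carrier G" by (metis One_nat_def gt1)
  show ?thesis using xs ab by (simp add: cc_def D_bf)
qed

lemma cc_inv: "cc absK G \<in> inv_bcochains G EE aE 1"
  unfolding inv_bcochains_def bcochains_def
proof (intro CollectI conjI ballI allI impI)
  fix xs assume "xs \<in> gtuples G 1"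
  then show "cc absK G xs \<in> vcarrier EE" using cc_bf by (simp add: dual_space_def)
next
  fix xs assume "xs \<notin> gtuples G 1"
  then show "cc absK G xs = vzero EE" by (simp add: cc_def dual_space_def)
next
  show "\<exists>C. \<forall>xs\<in>gtuples G 1. vnorm EE (cc absK G xs) \<le> C"
  proof (intro exI[of _ 1] ballI)
    fix xs assume xs: "xs \<in> gtuples G 1"
    then obtain a b where ab: "xs = [a, b]" "a \<in> carrier G" "b \<in> carrier G" by (metis One_nat_def gt1)
    have "op_norm absK (QV absK G) (Dfun absK G a b) \<le> 1"
    proof (rule opn_le)
      show "\<forall>A\<in>vcarrier (QV absK G). absK (Dfun absK G a b A) \<le> 1 * vnorm (QV absK G) A"
        using ab by (auto simp: Q_carrier D_cls D_bound Q_norm)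
    qed simp
    then show "vnorm EE (cc absK G xs) \<le> 1" using xs ab by (simp add: dual_space_def cc_def)
  qed
next
  fix g xs assume g: "g \<in> carrier G" and xs: "xs \<in> gtuples G 1"
  then obtain a b where ab: "xs = [a, b]" "a \<in> carrier G" "b \<in> carrier G" by (metis One_nat_def gt1)
  have ig: "inv\<^bsub>G\<^esub> g \<in> carrier G" using grp g by simp
  have ia: "inv\<^bsub>G\<^esub> g \<otimes>\<^bsub>G\<^esub> a \<in> carrier G" and ib: "inv\<^bsub>G\<^esub> g \<otimes>\<^bsub>G\<^esub> b \<in> carrier G"
    using ig ab grp by (simp_all add: group.is_monoid monoid.m_closed)
  have mx: "map (\<lambda>x. inv\<^bsub>G\<^esub> g \<otimes>\<^bsub>G\<^esub> x) xs \<in> gtuples G 1" using ia ib ab by (simp add: gtuples_def)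
  show "aE g (cc absK G (map (\<lambda>x. inv\<^bsub>G\<^esub> g \<otimes>\<^bsub>G\<^esub> x) xs)) = cc absK G xs"
  proof
    fix A
    show "aE g (cc absK G (map (\<lambda>x. inv\<^bsub>G\<^esub> g \<otimes>\<^bsub>G\<^esub> x) xs)) A = cc absK G xs A"
    proof (cases "A \<in> vcarrier (QV absK G)")
      case False then show ?thesis using xs by (simp add: dual_act_def cc_def Dfun_def)
    next
      case True
      then obtain f where f: "f \<in> Cb absK G" "A = cls absK G f" by (auto simp: Q_carrier)
      have "aE g (cc absK G (map (\<lambda>x. inv\<^bsub>G\<^esub> g \<otimes>\<^bsub>G\<^esub> x) xs)) A
          = Dfun absK G (inv\<^bsub>G\<^esub> g \<otimes>\<^bsub>G\<^esub> a) (inv\<^bsub>G\<^esub> g \<otimes>\<^bsub>G\<^esub> b) (cls absK G (left_translate G (inv\<^bsub>G\<^esub> g) f))"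
        using True mx ab f ig by (simp add: dual_act_def cc_def Q_act)
      also have "\<dots> = f b - f a"
        using D_cls[OF lt_Cb[OF ig f(1)] ia ib] ia ib grp_cancel2[OF g] ab
        by (simp add: left_translate_def)
      also have "\<dots> = cc absK G xs A" using xs ab f by (simp add: cc_def D_cls)
      finally show ?thesis .
    qed
  qed
qed

lemma cc_cocycle: "coboundary G EE 1 (cc absK G) = (\<lambda>xs. vzero EE)"
proof
  fix xs
  show "coboundary G EE 1 (cc absK G) xs = vzero EE"
  proof (cases "xs \<in> gtuples G (Suc 1)")
    case False then show ?thesis by (simp add: coboundary_def)
  next
    case True
    then obtain a b d where abd: "xs = [a, b, d]" "a \<in> carrier G" "b \<in> carrier G" "d \<in> carrier G"
      using gt2 by (metis Suc_1 One_nat_def)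
    have u: "[0..<1+2] = [0::nat, 1, 2]" by (simp add: upt_rec)
    show ?thesis
    proof
      fix A
      show "coboundary G EE 1 (cc absK G) xs A = vzero EE A"
      proof (cases "A \<in> vcarrier (QV absK G)")
        case False then show ?thesis using True
          by (simp add: coboundary_def vsum_dual u abd cc_def Dfun_def ds_simps)
      next
        case A: True
        then show ?thesis using True abd
          by (simp add: coboundary_def vsum_dual u cc_def Dfun_def ds_simps gtuples_def)
      qed
    qed
  qed
qed

end

context dir2 begin

lemma amenable_from_h:
  assumes hinv: "h \<in> inv_bcochains G EE aE 0" and hcob: "coboundary G EE 0 h = cc absK G"
  shows "normed_amenable absK G"
proof -
  have gt0: "[g] \<in> gtuples G 0" if "g \<in> carrier G" for g using that by (simp add: gtuples_def)
  have hbf: "h [g] \<in> bounded_functionals absK (QV absK G)" if "g \<in> carrier G" for g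
    using hinv gt0[OF that] by (simp add: inv_bcochains_def bcochains_def dual_space_def)
  have key: "h [g1] A - h [g0] A = rep A g1 - rep A g0"
    if g0: "g0 \<in> carrier G" and g1: "g1 \<in> carrier G" and A: "A \<in> vcarrier (QV absK G)" for g0 g1 A
  proof -
    have t: "[g0, g1] \<in> gtuples G (Suc 0)" using g0 g1 by (simp add: gtuples_def)
    have "coboundary G EE 0 h [g0, g1] A = cc absK G [g0, g1] A" using hcob by simp
    then show ?thesis using t A by (simp add: coboundary_def vsum_dual ds_simps cc_def Dfun_def upt_rec)
  qed
  have hinv1: "h [\<one>\<^bsub>G\<^esub>] B = h [inv\<^bsub>G\<^esub> g] (Qact absK G (inv\<^bsub>G\<^esub> g) B)"
    if g: "g \<in> carrier G" and B: "B \<in> vcarrier (QV absK G)" for g B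
  proof -
    have allinv: "\<forall>g\<in>carrier G. \<forall>xs\<in>gtuples G 0. aE g (h (map (\<lambda>x. inv\<^bsub>G\<^esub> g \<otimes>\<^bsub>G\<^esub> x) xs)) = h xs"
      using hinv by (simp add: inv_bcochains_def)
    have "aE g (h (map (\<lambda>x. inv\<^bsub>G\<^esub> g \<otimes>\<^bsub>G\<^esub> x) [\<one>\<^bsub>G\<^esub>])) = h [\<one>\<^bsub>G\<^esub>]"
      using allinv g gt0[OF one_in] by blast
    moreover have "inv\<^bsub>G\<^esub> g \<otimes>\<^bsub>G\<^esub> \<one>\<^bsub>G\<^esub> = inv\<^bsub>G\<^esub> g" using grp g by (simp add: group.is_monoid monoid.r_one)
    ultimately have "aE g (h [inv\<^bsub>G\<^esub> g]) = h [\<one>\<^bsub>G\<^esub>]" by simp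
    then show ?thesis using B by (metis dual_act_def)
  qed
  define m where "m = (\<lambda>f. f \<one>\<^bsub>G\<^esub> - h [\<one>\<^bsub>G\<^esub>] (cls absK G f))"
  have h1: "h [\<one>\<^bsub>G\<^esub>] \<in> bounded_functionals absK (QV absK G)" by (rule hbf[OF one_in])
  obtain C1 where C10: "C1 \<ge> 0" and C1: "\<forall>A\<in>vcarrier (QV absK G). absK (h [\<one>\<^bsub>G\<^esub>] A) \<le> C1 * vnorm (QV absK G) A"
    using h1 by (auto simp: bounded_functionals_def)
  have mean: "normed_mean absK G m"
    unfolding normed_mean_def
  proof (intro conjI ballI allI)
    fix f k assume f: "f \<in> Cb absK G" and k: "k \<in> Cb absK G"
    have "cls absK G (\<lambda>x. f x + k x) = vplus (QV absK G) (cls absK G f) (cls absK G k)"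
      using Q_plus[OF f k] by simp
    then show "m (\<lambda>x. f x + k x) = m f + m k"
      using bf_lin[OF h1 cls_in[OF f] cls_in[OF k]] by (simp add: m_def)
  next
    fix a f assume f: "f \<in> Cb absK G"
    have "cls absK G (\<lambda>x. a * f x) = vscale (QV absK G) a (cls absK G f)"
      using Q_scale[OF f] by simp
    then show "m (\<lambda>x. a * f x) = a * m f"
      using bf_scale[OF h1 cls_in[OF f]] by (simp add: m_def algebra_simps)
  next
    show "\<exists>C\<ge>0. \<forall>f\<in>Cb absK G. absK (m f) \<le> C * sup_norm absK G f"
    proof (intro exI[of _ "1 + C1"] conjI ballI)
      show "0 \<le> 1 + C1" using C10 by simp
      fix f assume f: "f \<in> Cb absK G"
      have s0: "sup_norm absK G f \<ge> 0" by (rule sup_nonneg[OF f])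
      have "absK (m f) \<le> max (absK (f \<one>\<^bsub>G\<^esub>)) (absK (h [\<one>\<^bsub>G\<^esub>] (cls absK G f)))"
        unfolding m_def by (rule na_diff[OF na])
      also have "\<dots> \<le> max (sup_norm absK G f) (C1 * sup_norm absK G f)"
      proof (rule max.mono)
        show "absK (f \<one>\<^bsub>G\<^esub>) \<le> sup_norm absK G f" by (rule sup_ge[OF f one_in])
        have "absK (h [\<one>\<^bsub>G\<^esub>] (cls absK G f)) \<le> C1 * qn (cls absK G f)"
          using C1 cls_in[OF f] by (simp add: Q_norm)
        also have "\<dots> \<le> C1 * sup_norm absK G f" using qn_self[OF f] C10 by (simp add: mult_left_mono)
        finally show "absK (h [\<one>\<^bsub>G\<^esub>] (cls absK G f)) \<le> C1 * sup_norm absK G f" .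
      qed
      also have "\<dots> \<le> (1 + C1) * sup_norm absK G f" using s0 C10 by (simp add: distrib_right)
      finally show "absK (m f) \<le> (1 + C1) * sup_norm absK G f" .
    qed
  next
    have "cls absK G (indicator_G G) = cls absK G (\<lambda>x. 0)"
      by (rule cls_eqI[where c="-1"]) (simp add: indicator_G_def)
    then have "h [\<one>\<^bsub>G\<^esub>] (cls absK G (indicator_G G)) = 0"
      using bf_zero[OF Q_kvs h1] by (simp add: Q_zero)
    then show "m (indicator_G G) = 1" using one_in by (simp add: m_def indicator_G_def)
  qed
  have minv: "\<forall>g\<in>carrier G. \<forall>f\<in>Cb absK G. m (left_translate G g f) = m f"
  proof (intro ballI)
    fix g f assume g: "g \<in> carrier G" and f: "f \<in> Cb absK G"
    have ig: "inv\<^bsub>G\<^esub> g \<in> carrier G" using grp g by simp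
    let ?A = "cls absK G f"
    have B: "Qact absK G g ?A = cls absK G (left_translate G g f)" by (rule Q_act[OF g f])
    have bk: "Qact absK G (inv\<^bsub>G\<^esub> g) (cls absK G (left_translate G g f)) = ?A"
      using Q_act[OF ig lt_Cb[OF g f]] lt_mult[OF ig g, of f, symmetric] lt_one[OF f] grp g
      by (simp add: group.l_inv)
    have e1: "h [\<one>\<^bsub>G\<^esub>] (cls absK G (left_translate G g f)) = h [inv\<^bsub>G\<^esub> g] ?A"
      using hinv1[OF g cls_in[OF lt_Cb[OF g f]]] bk by simp
    have e2: "h [inv\<^bsub>G\<^esub> g] ?A - h [\<one>\<^bsub>G\<^esub>] ?A = f (inv\<^bsub>G\<^esub> g) - f \<one>\<^bsub>G\<^esub>"
      using key[OF one_in ig cls_in[OF f]] rep_diff[OF f one_in ig] by simp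
    have e3: "left_translate G g f \<one>\<^bsub>G\<^esub> = f (inv\<^bsub>G\<^esub> g)"
      using one_in grp ig by (simp add: left_translate_def group.is_monoid monoid.r_one)
    show "m (left_translate G g f) = m f"
      unfolding m_def using e1 e2 e3 by (simp add: algebra_simps)
  qed
  show ?thesis unfolding normed_amenable_def using mean minv by blast
qed

end

lemma direction2:
  fixes absK :: "'k::field \<Rightarrow> real" and G :: "('g, 'b) monoid_scheme"
  assumes na: "nonarch_abs absK" and grp: "group G"
    and H: "\<forall>(E :: ('k, ('g \<Rightarrow> 'k) set \<Rightarrow> 'k) nspace) actE (V :: ('k, ('g \<Rightarrow> 'k) set) nspace) actV n.
               dual_module_of absK G E actE V actV \<and> n \<ge> 1 \<longrightarrow> Hb_vanishes G E actE n"
  shows "normed_amenable absK G"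
proof -
  interpret d: dir2 absK G unfolding dir2_def using na grp by blast
  have "Hb_vanishes G d.EE d.aE 1" using H d.dm by blast
  then obtain h where "h \<in> inv_bcochains G d.EE d.aE 0" "coboundary G d.EE 0 h = cc absK G"
    using d.cc_inv d.cc_cocycle unfolding Hb_vanishes_def by auto
  then show ?thesis by (rule d.amenable_from_h)
qed

theorem theorem1p4:
  fixes absK :: "'k::field \<Rightarrow> real"
    and G :: "('g, 'b) monoid_scheme"
  assumes "nonarch_abs absK"
    and "group G"
  shows "(normed_amenable absK G \<longrightarrow>
            (\<forall>(E :: ('k, 'e) nspace) actE (V :: ('k, 'v) nspace) actV n.
               dual_module_of absK G E actE V actV \<and> n \<ge> 1 \<longrightarrow> Hb_vanishes G E actE n))
       \<and> ((\<forall>(E :: ('k, ('g \<Rightarrow> 'k) set \<Rightarrow> 'k) nspace) actE (V :: ('k, ('g \<Rightarrow> 'k) set) nspace) actV n.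
               dual_module_of absK G E actE V actV \<and> n \<ge> 1 \<longrightarrow> Hb_vanishes G E actE n)
            \<longrightarrow> normed_amenable absK G)"
proof (intro conjI impI allI)
  fix E :: "('k, 'e) nspace" and actE and V :: "('k, 'v) nspace" and actV and n :: nat
  assume am: "normed_amenable absK G"
    and h: "dual_module_of absK G E actE V actV \<and> n \<ge> 1"
  show "Hb_vanishes G E actE n"
    using direction1[OF assms am] h by blast
next
  assume H: "\<forall>(E :: ('k, ('g \<Rightarrow> 'k) set \<Rightarrow> 'k) nspace) actE (V :: ('k, ('g \<Rightarrow> 'k) set) nspace) actV n.
               dual_module_of absK G E actE V actV \<and> n \<ge> 1 \<longrightarrow> Hb_vanishes G E actE n"
  show "normed_amenable absK G" by (rule direction2[OF assms H])
qed

end
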